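(* Let $\sigma^2>0$, $\gamma>0$, and let $n\ge 1$ be an integer. Let $\mathbf{H}'\in\mathbb{C}^{N_R\times M}$ and let $L$ be a positive integer with $L\le \operatorname{rank}(\mathbf{H}')$. Let $\lambda_{H'}(1)\ge\cdots\ge\lambda_{H'}(L)>0$ be the $L$ largest eigenvalues of $\mathbf{H}'^H\mathbf{H}'$, and let $\mathbf{V}^{(1)}\in\mathbb{C}^{M\times L}$ be a matrix whose orthonormal columns are corresponding right singular vectors of $\mathbf{H}'$ (i.e. corresponding unit-norm eigenvectors of $\mathbf{H}'^H\mathbf{H}'$). Consider the problem $$\min_{\mathbf{U}\in\mathbb{C}^{M\times L}} \operatorname{tr}\{\mathbf{U}^H\mathbf{U}\}\quad\text{subject to}\quad \mathbf{U}^H\mathbf{H}'^H\mathbf{H}'\mathbf{U}\ \text{invertible and}\ \sum_{\ell=1}^{L}\sigma^2\Big[\big(\mathbf{U}^H\mathbf{H}'^H\mathbf{H}'\mathbf{U}\big)^{-1}\Big]_{\ell,\ell}\le \frac{\gamma}{n}.$$ Define, for $\ell=1,\dots,L$, $$\lambda_{U}(\ell)=\sqrt{\nu\,\frac{\sigma^2}{\lambda_{H'}(\ell)}},$$ where $\nu>0$ is the (unique) constant such that $\sum_{\ell=1}^{L}\frac{\sigma^2}{\lambda_U(\ell)\,\lambda_{H'}(\ell)}=\frac{\gamma}{n}$, and let $\boldsymbol{\Lambda}_U=\operatorname{diag}(\lambda_U(1),\dots,\lambda_U(L))$. Then for every unitary $\mathbf{S}\in\mathbb{C}^{L\times L}$,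 the matrix $$\mathbf{U}=\mathbf{V}^{(1)}\boldsymbol{\Lambda}_U^{1/2}\mathbf{S}^H$$ is an optimal solution of the problem, and the optimal value equals $\sum_{\ell=1}^{L}\lambda_U(\ell)$. Moreover, $\mathbf{S}$ can be chosen so that every term satisfies $\sigma^2\big[(\mathbf{U}^H\mathbf{H}'^H\mathbf{H}'\mathbf{U})^{-1}\big]_{\ell,\ell}=\epsilon$ for all $\ell=1,\dots,L$, where $\epsilon=\frac{1}{L}\frac{\gamma}{n}$.
   Context: This is the per-subcarrier, per-user power-minimization problem arising in a zero-forcing transceiver design: $\mathbf{H}'$ plays the role of the equivalent channel matrix of a user on a subcarrier, $\mathbf{U}$ is the transmit precoding matrix, $\operatorname{tr}\{\mathbf{U}^H\mathbf{U}\}$ is (proportional to) the transmit power, and the quantities $\sigma^2[(\mathbf{U}^H\mathbf{H}'^H\mathbf{H}'\mathbf{U})^{-1}]_{\ell,\ell}$ are the mean-square errors of the $L$ data streams under the zero-forcing receiver $\mathbf{G}=(\mathbf{U}^H\mathbf{H}'^H\mathbf{H}'\mathbf{U})^{-1}\mathbf{U}^H\mathbf{H}'^H$. $[\mathbf{A}]_{\ell,\ell}$ denotes the $(\ell,\ell)$ entry of $\mathbf{A}$; $^H$ denotes conjugate transpose; $\boldsymbol{\Lambda}_U^{1/2}$ is the diagonal matrix with entries $\sqrt{\lambda_U(\ell)}$. *)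

theory Defs
  imports "Jordan_Normal_Form.Schur_Decomposition" "Jordan_Normal_Form.DL_Rank"
    "Jordan_Normal_Form.Gauss_Jordan_Elimination" "Jordan_Normal_Form.Char_Poly"
begin

definition mtrace :: "complex mat \<Rightarrow> complex" where
  "mtrace A = (\<Sum>i<dim_row A. A $$ (i, i))"

text \<open>Matrix inverse (meaningful when the matrix is invertible).\<close>
definition minv :: "complex mat \<Rightarrow> complex mat" where
  "minv A = the (mat_inverse A)"

definition unitary_mat :: "nat \<Rightarrow> complex mat \<Rightarrow> bool" where
  "unitary_mat L S \<longleftrightarrow> S \<in> carrier_mat L L \<and> mat_adjoint S * S = 1\<^sub>m L"

definition gram :: "complex mat \<Rightarrow> complex mat \<Rightarrow> complex mat" where
  "gram H U = mat_adjoint U * mat_adjoint H * H * U"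

definition feasible ::
  "real \<Rightarrow> real \<Rightarrow> nat \<Rightarrow> complex mat \<Rightarrow> nat \<Rightarrow> nat \<Rightarrow> complex mat \<Rightarrow> bool" where
  "feasible \<sigma>2 \<gamma> n H M L U \<longleftrightarrow>
     U \<in> carrier_mat M L \<and> invertible_mat (gram H U) \<and>
     Re (\<Sum>l<L. complex_of_real \<sigma>2 * minv (gram H U) $$ (l, l)) \<le> \<gamma> / real n"

end

theory Submission
  imports Defs
begin

lemma adj_dims[simp]: "dim_row (mat_adjoint A) = dim_col A" "dim_col (mat_adjoint A) = dim_row A"
  by (auto simp: mat_adjoint_def mat_of_rows_def)

lemma adj_index[simp]: "i < dim_col A \<Longrightarrow> j < dim_row A \<Longrightarrow>
   mat_adjoint (A::complex mat) $$ (i,j) = cnj (A $$ (j,i))"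
  by (auto simp: mat_adjoint_def mat_of_rows_def)

lemma adj_carrier[simp]: "A \<in> carrier_mat n m \<Longrightarrow> mat_adjoint A \<in> carrier_mat m n"
  unfolding carrier_mat_def by simp

lemma adj_adj[simp]: "mat_adjoint (mat_adjoint (A::complex mat)) = A"
  by (rule eq_matI) simp_all

lemma adj_mult: "A \<in> carrier_mat n k \<Longrightarrow> B \<in> carrier_mat k m \<Longrightarrow>
  mat_adjoint ((A::complex mat) * B) = mat_adjoint B * mat_adjoint A"
  apply (rule eq_matI)
  by (simp_all add: scalar_prod_def sum_conjugate mult.commute)

lemma adj_one[simp]: "mat_adjoint (1\<^sub>m n :: complex mat) = 1\<^sub>m n"
  by (rule eq_matI, simp_all)

lemma adj_zero[simp]: "mat_adjoint (0\<^sub>m n m :: complex mat) = 0\<^sub>m m n"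
  by (rule eq_matI, simp_all)


lemma adj_four_block: "A \<in> carrier_mat n1 m1 \<Longrightarrow> B \<in> carrier_mat n1 m2 \<Longrightarrow>
   C \<in> carrier_mat n2 m1 \<Longrightarrow> D \<in> carrier_mat n2 m2 \<Longrightarrow>
   mat_adjoint (four_block_mat A B C D :: complex mat) =
   four_block_mat (mat_adjoint A) (mat_adjoint C) (mat_adjoint B) (mat_adjoint D)"
  unfolding carrier_mat_def by (rule eq_matI) simp_all

lemma cdot_self: fixes w :: "complex vec"
  shows "w \<bullet>c w = of_real (Re (w \<bullet>c w))" "Re (w \<bullet>c w) \<ge> 0"
  using conjugate_square_ge_0_vec[of w] by (auto simp: less_eq_complex_def complex_eq_iff)

lemma cdot_pos: fixes w :: "complex vec"
  shows "w \<in> carrier_vec n \<Longrightarrow> w \<noteq> 0\<^sub>v n \<Longrightarrow> Re (w \<bullet>c w) > 0"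
  using conjugate_square_greater_0_vec[of w n] by (auto simp: less_complex_def)

lemma cdot_smult: fixes w u :: "complex vec"
  assumes "w \<in> carrier_vec n" "u \<in> carrier_vec n"
  shows "(a \<cdot>\<^sub>v w) \<bullet>c (b \<cdot>\<^sub>v u) = a * cnj b * (w \<bullet>c u)"
  using assms by (auto simp: scalar_prod_def sum_distrib_left intro!: sum.cong)

lemma aux1: assumes "r > 0"
  shows "complex_of_real (1/sqrt r) * cnj (complex_of_real (1/sqrt r)) * complex_of_real r = 1"
proof -
  have s: "sqrt r * sqrt r = r" using assms by simp
  have "1/sqrt r * (1/sqrt r) * r = 1" using assms s
    by (simp add: field_simps)
  moreover have "complex_of_real (1/sqrt r) * cnj (complex_of_real (1/sqrt r)) * complex_of_real r
     = complex_of_real (1/sqrt r * (1/sqrt r) * r)"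
    by (simp only: complex_cnj_complex_of_real of_real_mult)
  ultimately show ?thesis by simp
qed

definition nrm :: "complex vec \<Rightarrow> complex vec" where
  "nrm w = complex_of_real (1 / sqrt (Re (w \<bullet>c w))) \<cdot>\<^sub>v w"

lemma unit_basis:
  fixes v :: "complex vec"
  assumes v: "v \<in> carrier_vec n" and v1: "v \<bullet>c v = 1"
  shows "\<exists>W. W \<in> carrier_mat n n \<and> mat_adjoint W * W = 1\<^sub>m n \<and> col W 0 = v"
proof -
  interpret cof_vec_space n "TYPE(complex)" .
  have v0: "v \<noteq> 0\<^sub>v n" using v1 by auto
  define b where "b = basis_completion v"
  define ws0 where "ws0 = gram_schmidt n b"
  from basis_completion[OF v v0, folded b_def]
  have span_b: "span (set b) = carrier_vec n" and dist_b: "distinct b" 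
    and indep: "\<not> lin_dep (set b)" and b: "set b \<subseteq> carrier_vec n" 
    and hdb: "hd b = v" and len_b: "length b = n" by auto
  have n0: "n \<noteq> 0" using v v0 by auto
  from hdb len_b n0 obtain vs where bv: "b = v # vs" by (cases b, auto)
  from gram_schmidt_result[OF b dist_b indep refl, folded ws0_def]
  have ws0: "set ws0 \<subseteq> carrier_vec n" "corthogonal ws0" "length ws0 = n" 
    by (auto simp: len_b)
  from gram_schmidt_hd[OF v, of vs, folded bv] have hdws: "hd ws0 = v" unfolding ws0_def .
  define ws where "ws = map nrm ws0"
  define W where "W = mat_of_cols n ws"
  have W: "W \<in> carrier_mat n n" unfolding W_def ws_def using ws0 mat_of_cols_carrier(1)[of n "map nrm ws0"] by simp
  have wsi: "i < n \<Longrightarrow> ws ! i = nrm (ws0 ! i)" for i unfolding ws_def using ws0 by simp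
  have ws0c: "i < n \<Longrightarrow> ws0 ! i \<in> carrier_vec n" for i using ws0 by auto
  have colW: "i < n \<Longrightarrow> col W i = nrm (ws0 ! i)" for i
  proof -
    assume i: "i < n"
    have "set ws \<subseteq> carrier_vec n" using ws0 unfolding ws_def nrm_def by auto
    then have "col W i = ws ! i" unfolding W_def using i ws0 by (intro col_mat_of_cols) (auto simp: ws_def)
    then show ?thesis using wsi i by simp
  qed
  have ortho: "i < n \<Longrightarrow> j < n \<Longrightarrow> nrm (ws0 ! i) \<bullet>c nrm (ws0 ! j) = (if i = j then 1 else 0)" for i j
  proof -
    assume i: "i < n" and j: "j < n"
    have "nrm (ws0 ! i) \<bullet>c nrm (ws0 ! j) = complex_of_real (1 / sqrt (Re (ws0 ! i \<bullet>c ws0 ! i))) *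
       cnj (complex_of_real (1 / sqrt (Re (ws0 ! j \<bullet>c ws0 ! j)))) * (ws0 ! i \<bullet>c ws0 ! j)"
      unfolding nrm_def by (rule cdot_smult[OF ws0c[OF i] ws0c[OF j]])
    also have "\<dots> = (if i = j then 1 else 0)"
    proof (cases "i = j")
      case True
      have ne: "ws0 ! i \<noteq> 0\<^sub>v n"
        using corthogonalD[OF ws0(2), of i i] i ws0 by auto
      have pos: "Re (ws0 ! i \<bullet>c ws0 ! i) > 0" by (rule cdot_pos[OF ws0c[OF i] ne])
      define r where "r = Re (ws0 ! i \<bullet>c ws0 ! i)"
      have d: "ws0 ! i \<bullet>c ws0 ! i = of_real r" unfolding r_def by (rule cdot_self)
      have "complex_of_real (1 / sqrt (Re (ws0 ! i \<bullet>c ws0 ! i))) *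
       cnj (complex_of_real (1 / sqrt (Re (ws0 ! j \<bullet>c ws0 ! j)))) * (ws0 ! i \<bullet>c ws0 ! j)
       = complex_of_real (1/sqrt r) * cnj (complex_of_real (1/sqrt r)) * complex_of_real r"
        by (simp only: True[symmetric] d Re_complex_of_real)
      also have "\<dots> = 1" using aux1 pos r_def by blast
      finally show ?thesis using True by (simp only: True simp_thms if_True)
    next
      case False
      then show ?thesis using corthogonalD[OF ws0(2), of i j] i j ws0 by auto
    qed
    finally show ?thesis .
  qed
  have "mat_adjoint W * W = 1\<^sub>m n"
  proof (rule eq_matI)
    fix i j assume i: "i < dim_row (1\<^sub>m n :: complex mat)" and j: "j < dim_col (1\<^sub>m n :: complex mat)"
    have r: "row (mat_adjoint W) i = conjugate (col W i)"
      using i W by (intro eq_vecI) auto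
    have "(mat_adjoint W * W) $$ (i,j) = conjugate (col W i) \<bullet> col W j"
      using i j W r by simp
    also have "\<dots> = col W j \<bullet>c col W i"
      using W i j by (simp add: conjugate_vec_sprod_comm[of _ n])
    finally have "(mat_adjoint W * W) $$ (i,j) = col W j \<bullet>c col W i" .
    also have "\<dots> = 1\<^sub>m n $$ (i,j)" using i j by (simp add: colW ortho)
    finally show "(mat_adjoint W * W) $$ (i,j) = 1\<^sub>m n $$ (i,j)" .
  qed (use W in auto)
  moreover have "col W 0 = v"
  proof -
    have "ws0 ! 0 = v" using hdws ws0 n0 by (cases ws0, auto)
    moreover have "nrm v = v" unfolding nrm_def using v1 by simp
    ultimately show ?thesis using colW n0 by auto
  qed
  ultimately show ?thesis using W by blast
qed

lemma nrm_unit: fixes v :: "complex vec"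
  assumes "v \<in> carrier_vec n" "v \<noteq> 0\<^sub>v n"
  shows "nrm v \<bullet>c nrm v = 1" "nrm v \<in> carrier_vec n"
proof -
  define r where "r = Re (v \<bullet>c v)"
  have pos: "r > 0" unfolding r_def by (rule cdot_pos[OF assms])
  have d: "v \<bullet>c v = of_real r" unfolding r_def by (rule cdot_self)
  have "nrm v \<bullet>c nrm v = complex_of_real (1/sqrt r) * cnj (complex_of_real (1/sqrt r)) * (v \<bullet>c v)"
    unfolding nrm_def r_def by (rule cdot_smult[OF assms(1) assms(1)])
  also have "\<dots> = 1" unfolding d using aux1[OF pos] .
  finally show "nrm v \<bullet>c nrm v = 1" .
  show "nrm v \<in> carrier_vec n" using assms(1) unfolding nrm_def by simp
qed

lemma nrm_eig: fixes A :: "complex mat"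
  assumes "A \<in> carrier_mat n n" "v \<in> carrier_vec n" "A *\<^sub>v v = e \<cdot>\<^sub>v v"
  shows "A *\<^sub>v nrm v = e \<cdot>\<^sub>v nrm v"
  using assms unfolding nrm_def by (simp add: mult_mat_vec smult_smult_assoc mult.commute)

lemma mult_adj_index: fixes W B :: "complex mat"
  assumes "W \<in> carrier_mat n m" "B \<in> carrier_mat n k" "i < m" "j < k"
  shows "(mat_adjoint W * B) $$ (i,j) = col B j \<bullet>c col W i"
proof -
  have r: "row (mat_adjoint W) i = conjugate (col W i)"
    using assms by (intro eq_vecI) auto
  have "(mat_adjoint W * B) $$ (i,j) = conjugate (col W i) \<bullet> col B j"
    using assms r by simp
  also have "\<dots> = col B j \<bullet>c col W i"
    using assms by (simp add: conjugate_vec_sprod_comm[of _ n])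
  finally show ?thesis .
qed

lemma spectral:
  fixes A :: "complex mat"
  assumes "A \<in> carrier_mat n n" "mat_adjoint A = A" "char_poly A = (\<Prod>e\<leftarrow>es. [:-e,1:])"
  shows "\<exists>Q. Q \<in> carrier_mat n n \<and> mat_adjoint Q * Q = 1\<^sub>m n \<and> Q * mat_adjoint Q = 1\<^sub>m n \<and>
     mat_adjoint Q * A * Q = mat n n (\<lambda>(i,j). if i = j then es!i else 0)"
  using assms
proof (induct es arbitrary: n A)
  case Nil
  then have n: "n = 0" using degree_monic_char_poly[of A n] by auto
  have c: "1\<^sub>m 0 \<in> carrier_mat 0 0" by simp
  have "mat_adjoint (1\<^sub>m 0) * A * 1\<^sub>m 0 = mat n n (\<lambda>(i,j). if i = j then ([]::complex list)!i else 0)"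
    by (rule eq_matI) (use n Nil in auto)
  then show ?case using n c by (intro exI[of _ "1\<^sub>m 0"]) simp
next
  case (Cons e es n A)
  have A: "A \<in> carrier_mat n n" and herm: "mat_adjoint A = A" using Cons.prems by auto
  let ?cp = "char_poly A"
  have cp: "?cp = [: -e, 1 :] * (\<Prod>e \<leftarrow> es. [:- e, 1:])" using Cons.prems by auto
  have mon: "monic (\<Prod>e\<leftarrow> es. [:- e, 1:])" by (rule monic_prod_list, auto)
  have deg: "degree ?cp = Suc (degree (\<Prod>e\<leftarrow> es. [:- e, 1:]))" unfolding cp
    by (subst degree_mult_eq, insert mon, auto)
  with degree_monic_char_poly[OF A] have n: "n \<noteq> 0" by auto
  have ev: "eigenvalue A e" unfolding eigenvalue_root_char_poly[OF A] cp by simp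
  define v0 where "v0 = find_eigenvector A e"
  from find_eigenvector[OF A ev] have "eigenvector A v0 e" unfolding v0_def .
  then have v0: "v0 \<in> carrier_vec n" "v0 \<noteq> 0\<^sub>v n" "A *\<^sub>v v0 = e \<cdot>\<^sub>v v0"
    unfolding eigenvector_def using A by auto
  define v where "v = nrm v0"
  have v: "v \<in> carrier_vec n" "v \<bullet>c v = 1" using nrm_unit[OF v0(1,2)] unfolding v_def by auto
  have Av: "A *\<^sub>v v = e \<cdot>\<^sub>v v" unfolding v_def by (rule nrm_eig[OF A v0(1) v0(3)])
  obtain W where W: "W \<in> carrier_mat n n" and WW: "mat_adjoint W * W = 1\<^sub>m n" and W0: "col W 0 = v"
    using unit_basis[OF v] by blast
  have aW: "mat_adjoint W \<in> carrier_mat n n" using W by simp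
  have WW': "W * mat_adjoint W = 1\<^sub>m n" by (rule mat_mult_left_right_inverse[OF aW W WW])
  define A' where "A' = mat_adjoint W * A * W"
  have A': "A' \<in> carrier_mat n n" unfolding A'_def using mult_carrier_mat[OF mult_carrier_mat[OF aW A] W] .
  have A'2: "A' = mat_adjoint W * (A * W)" unfolding A'_def by (rule assoc_mult_mat[OF aW A W])
  have hA': "mat_adjoint A' = A'"
  proof -
    have "mat_adjoint A' = mat_adjoint (A * W) * mat_adjoint (mat_adjoint W)"
      unfolding A'2 by (rule adj_mult[OF aW mult_carrier_mat[OF A W]])
    also have "\<dots> = (mat_adjoint W * A) * W" using adj_mult[OF A W] herm by simp
    finally show ?thesis unfolding A'_def .
  qed
  have col0: "A' $$ (i,0) = (if i = 0 then e else 0)" if i: "i < n" for i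
  proof -
    have n0: "0 < n" using n by simp
    have cAW: "col (A * W) 0 = e \<cdot>\<^sub>v v" by (simp only: col_mult2[OF A W n0] W0 Av)
    have "A' $$ (i,0) = col (A * W) 0 \<bullet>c col W i"
      unfolding A'2 using n by (intro mult_adj_index[OF W mult_carrier_mat[OF A W] i]) simp
    also have "\<dots> = (e \<cdot>\<^sub>v col W 0) \<bullet>c col W i" by (simp only: cAW W0)
    also have "\<dots> = e * (col W 0 \<bullet>c col W i)"
      using W i n by (simp add: scalar_prod_def sum_distrib_left mult.assoc)
    also have "col W 0 \<bullet>c col W i = (mat_adjoint W * W) $$ (i,0)"
      by (rule mult_adj_index[OF W W i, symmetric]) (use n in auto)
    also have "\<dots> = (if i = 0 then 1 else 0)" unfolding WW using i n by simp
    finally show ?thesis by simp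
  qed
  have ereal: "cnj e = e"
  proof -
    have "A' $$ (0,0) = mat_adjoint A' $$ (0,0)" using hA' by simp
    also have "\<dots> = cnj (A' $$ (0,0))" using A' n by simp
    finally show ?thesis using col0[of 0] n by simp
  qed
  have row0: "A' $$ (0,j) = (if j = 0 then e else 0)" if j: "j < n" for j
  proof -
    have "A' $$ (0,j) = mat_adjoint A' $$ (0,j)" using hA' by simp
    also have "\<dots> = cnj (A' $$ (j,0))" using A' n j by simp
    finally show ?thesis using col0[OF j] ereal by auto
  qed
  define A3 where "A3 = mat (n-1) (n-1) (\<lambda>(i,j). A' $$ (Suc i, Suc j))"
  have A3: "A3 \<in> carrier_mat (n-1) (n-1)" unfolding A3_def by simp
  define E where "E = mat 1 1 (\<lambda>_. e)"
  have E: "E \<in> carrier_mat 1 1" unfolding E_def by simp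
  have nn: "n = 1 + (n - 1)" using n by simp
  have blk: "A' = four_block_mat E (0\<^sub>m 1 (n-1)) (0\<^sub>m (n-1) 1) A3"
  proof (rule eq_matI)
    fix i j assume i: "i < dim_row (four_block_mat E (0\<^sub>m 1 (n-1)) (0\<^sub>m (n-1) 1) A3)"
      and j: "j < dim_col (four_block_mat E (0\<^sub>m 1 (n-1)) (0\<^sub>m (n-1) 1) A3)"
    have i': "i < n" and j': "j < n" using i j E A3 n by auto
    show "A' $$ (i, j) = four_block_mat E (0\<^sub>m 1 (n-1)) (0\<^sub>m (n-1) 1) A3 $$ (i, j)"
    proof (cases "i = 0")
      case True
      then show ?thesis using row0[OF j'] i j E A3 by (simp add: E_def)
    next
      case False
      note F = this
      show ?thesis
      proof (cases "j = 0")
        case True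
        then show ?thesis using col0[OF i'] F i j E A3 by (simp add: E_def)
      next
        case False
        then show ?thesis using F i j i' j' E A3
          by (cases i; cases j) (simp_all add: A3_def)
      qed
    qed
  qed (use A' E A3 n in auto)
  have hA3: "mat_adjoint A3 = A3"
  proof (rule eq_matI)
    fix i j assume i: "i < dim_row A3" and j: "j < dim_col A3"
    have i': "Suc i < n" and j': "Suc j < n" using i j A3 by auto
    have "mat_adjoint A3 $$ (i,j) = cnj (A' $$ (Suc j, Suc i))" using i j A3 by (simp add: A3_def)
    also have "\<dots> = mat_adjoint A' $$ (Suc i, Suc j)" using i' j' A' by simp
    also have "\<dots> = A3 $$ (i,j)" using hA' i j A3 by (simp add: A3_def)
    finally show "mat_adjoint A3 $$ (i,j) = A3 $$ (i,j)" .
  qed (use A3 in auto)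
  have sim: "similar_mat A' A"
    unfolding similar_mat_def similar_mat_wit_def Let_def
    by (rule exI[of _ "mat_adjoint W"], rule exI[of _ W]) (use A' A W aW WW WW' in \<open>simp add: A'_def mult_carrier_mat[OF mult_carrier_mat[OF aW A] W]\<close>)
  have "char_poly A' = [: -e, 1 :] * (\<Prod>e \<leftarrow> es. [:- e, 1:])" using char_poly_similar[OF sim] cp by simp
  moreover have "char_poly A' = char_poly E * char_poly A3"
    unfolding blk by (rule char_poly_four_block_zeros_col[OF E _ A3]) simp
  moreover have "char_poly E = [: -e, 1 :]"
    by (simp add: E_def char_poly_defs det_def sign_def)
  ultimately have cp3: "char_poly A3 = (\<Prod>e \<leftarrow> es. [:- e, 1:])"
    by (metis mult_cancel_left pCons_eq_0_iff zero_neq_one)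
  obtain Q3 where Q3: "Q3 \<in> carrier_mat (n-1) (n-1)" and Q3u: "mat_adjoint Q3 * Q3 = 1\<^sub>m (n-1)"
    and Q3d: "mat_adjoint Q3 * A3 * Q3 = mat (n-1) (n-1) (\<lambda>(i,j). if i = j then es!i else 0)"
    using Cons.hyps[OF A3 hA3 cp3] by blast
  define F where "F = four_block_mat (1\<^sub>m 1) (0\<^sub>m 1 (n-1)) (0\<^sub>m (n-1) 1) Q3"
  have F: "F \<in> carrier_mat n n" unfolding F_def using Q3 nn by (metis four_block_carrier_mat one_carrier_mat)
  have aF: "mat_adjoint F = four_block_mat (1\<^sub>m 1) (0\<^sub>m 1 (n-1)) (0\<^sub>m (n-1) 1) (mat_adjoint Q3)"
    unfolding F_def by (subst adj_four_block[OF _ _ _ Q3]) auto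
  have aQ3: "mat_adjoint Q3 \<in> carrier_mat (n-1) (n-1)" using Q3 by simp
  have FF: "mat_adjoint F * F = 1\<^sub>m n"
    unfolding aF unfolding F_def
    by (subst mult_four_block_mat[OF one_carrier_mat zero_carrier_mat zero_carrier_mat aQ3
           one_carrier_mat zero_carrier_mat zero_carrier_mat Q3])
       (use Q3 aQ3 Q3u nn in \<open>simp\<close>)
  have FAF: "mat_adjoint F * A' * F = mat n n (\<lambda>(i,j). if i = j then (e#es)!i else 0)"
  proof -
    have "mat_adjoint F * A' = four_block_mat E (0\<^sub>m 1 (n-1)) (0\<^sub>m (n-1) 1) (mat_adjoint Q3 * A3)"
      unfolding aF blk
      by (subst mult_four_block_mat[OF one_carrier_mat zero_carrier_mat zero_carrier_mat aQ3
           E zero_carrier_mat zero_carrier_mat A3])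
       (use Q3 aQ3 A3 E mult_carrier_mat[OF aQ3 A3] in \<open>simp\<close>)
    also have "\<dots> * F = four_block_mat E (0\<^sub>m 1 (n-1)) (0\<^sub>m (n-1) 1) (mat_adjoint Q3 * A3 * Q3)"
      unfolding F_def
      by (subst mult_four_block_mat[OF E zero_carrier_mat zero_carrier_mat _
           one_carrier_mat zero_carrier_mat zero_carrier_mat Q3])
       (use Q3 aQ3 A3 E mult_carrier_mat[OF aQ3 A3] mult_carrier_mat[OF mult_carrier_mat[OF aQ3 A3] Q3] in \<open>simp_all\<close>)
    also have "\<dots> = mat n n (\<lambda>(i,j). if i = j then (e#es)!i else 0)"
      unfolding Q3d
    proof (rule eq_matI)
      fix i j assume i: "i < dim_row (mat n n (\<lambda>(i,j). if i = j then (e#es)!i else (0::complex)))"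
        and j: "j < dim_col (mat n n (\<lambda>(i,j). if i = j then (e#es)!i else (0::complex)))"
      have i': "i < n" and j': "j < n" using i j by auto
      show "four_block_mat E (0\<^sub>m 1 (n - 1)) (0\<^sub>m (n - 1) 1)
          (mat (n - 1) (n - 1) (\<lambda>(i, j). if i = j then es ! i else 0)) $$ (i, j) =
         mat n n (\<lambda>(i, j). if i = j then (e # es) ! i else 0) $$ (i, j)"
        using i' j' E n by (cases i; cases j) (auto simp: E_def)
    qed (use E n in auto)
    finally show ?thesis .
  qed
  define Q where "Q = W * F"
  have Q: "Q \<in> carrier_mat n n" unfolding Q_def using mult_carrier_mat[OF W F] .
  have aQ: "mat_adjoint Q = mat_adjoint F * mat_adjoint W" unfolding Q_def by (rule adj_mult[OF W F])
  have aFc: "mat_adjoint F \<in> carrier_mat n n" using F by simp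
  have QQ: "mat_adjoint Q * Q = 1\<^sub>m n"
  proof -
    have "mat_adjoint Q * Q = mat_adjoint F * (mat_adjoint W * W) * F"
      unfolding aQ unfolding Q_def
      by (simp add: assoc_mult_mat[OF aFc aW mult_carrier_mat[OF W F]] assoc_mult_mat[OF aW W F]
          assoc_mult_mat[OF aFc mult_carrier_mat[OF aW W] F])
    also have "\<dots> = 1\<^sub>m n" unfolding WW using aFc F FF by simp
    finally show ?thesis .
  qed
  have QQ': "Q * mat_adjoint Q = 1\<^sub>m n"
    by (rule mat_mult_left_right_inverse[OF _ Q QQ]) (use Q in simp)
  have "mat_adjoint Q * A * Q = mat_adjoint F * A' * F"
    unfolding aQ unfolding Q_def A'_def
    by (simp add: assoc_mult_mat[OF mult_carrier_mat[OF aFc aW] A mult_carrier_mat[OF W F]]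
      assoc_mult_mat[OF aFc aW mult_carrier_mat[OF A mult_carrier_mat[OF W F]]]
      assoc_mult_mat[OF aFc mult_carrier_mat[OF mult_carrier_mat[OF aW A] W] F]
      assoc_mult_mat[OF mult_carrier_mat[OF aW A] W F]
      assoc_mult_mat[OF aW A mult_carrier_mat[OF W F]])
  with FAF have "mat_adjoint Q * A * Q = mat n n (\<lambda>(i,j). if i = j then (e#es)!i else 0)" by simp
  then show ?case using Q QQ QQ' by blast
qed

lemma cs_real: fixes f g :: "nat \<Rightarrow> real" assumes "finite A"
  shows "(\<Sum>i\<in>A. f i * g i)\<^sup>2 \<le> (\<Sum>i\<in>A. (f i)\<^sup>2) * (\<Sum>i\<in>A. (g i)\<^sup>2)"
proof -
  have "0 \<le> (\<Sum>i\<in>A. \<Sum>j\<in>A. (f i * g j - f j * g i)\<^sup>2)" by (intro sum_nonneg) simp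
  also have "\<dots> = (\<Sum>i\<in>A. \<Sum>j\<in>A. (f i)\<^sup>2 * (g j)\<^sup>2) + (\<Sum>i\<in>A. \<Sum>j\<in>A. (f j)\<^sup>2 * (g i)\<^sup>2)
      - 2 * (\<Sum>i\<in>A. \<Sum>j\<in>A. (f i * g i) * (f j * g j))"
    by (simp add: sum_subtractf sum.distrib sum_distrib_left power2_eq_square algebra_simps)
  also have "(\<Sum>i\<in>A. \<Sum>j\<in>A. (f i)\<^sup>2 * (g j)\<^sup>2) = (\<Sum>i\<in>A. (f i)\<^sup>2) * (\<Sum>i\<in>A. (g i)\<^sup>2)"
    by (simp add: sum_product)
  also have "(\<Sum>i\<in>A. \<Sum>j\<in>A. (f j)\<^sup>2 * (g i)\<^sup>2) = (\<Sum>i\<in>A. (f i)\<^sup>2) * (\<Sum>i\<in>A. (g i)\<^sup>2)"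
    by (subst sum.swap) (simp add: sum_product)
  also have "(\<Sum>i\<in>A. \<Sum>j\<in>A. (f i * g i) * (f j * g j)) = (\<Sum>i\<in>A. f i * g i)\<^sup>2"
    by (simp add: sum_product power2_eq_square)
  finally show ?thesis by simp
qed

lemma cs_complex: fixes u v :: "nat \<Rightarrow> complex" assumes "finite A"
  shows "(cmod (\<Sum>i\<in>A. u i * v i))\<^sup>2 \<le> (\<Sum>i\<in>A. (cmod (u i))\<^sup>2) * (\<Sum>i\<in>A. (cmod (v i))\<^sup>2)"
proof -
  have "cmod (\<Sum>i\<in>A. u i * v i) \<le> (\<Sum>i\<in>A. cmod (u i) * cmod (v i))"
    by (rule order_trans[OF norm_sum]) (simp add: norm_mult)
  then have "(cmod (\<Sum>i\<in>A. u i * v i))\<^sup>2 \<le> (\<Sum>i\<in>A. cmod (u i) * cmod (v i))\<^sup>2"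
    by (intro power_mono) auto
  also have "\<dots> \<le> (\<Sum>i\<in>A. (cmod (u i))\<^sup>2) * (\<Sum>i\<in>A. (cmod (v i))\<^sup>2)"
    by (rule cs_real[OF assms])
  finally show ?thesis .
qed

lemma cs_sqrt: fixes a b :: "nat \<Rightarrow> real" assumes "finite A" "\<And>i. i \<in> A \<Longrightarrow> a i \<ge> 0" "\<And>i. i \<in> A \<Longrightarrow> b i \<ge> 0"
  shows "(\<Sum>i\<in>A. sqrt (a i * b i)) \<le> sqrt (sum a A) * sqrt (sum b A)"
proof -
  have "(\<Sum>i\<in>A. sqrt (a i) * sqrt (b i))\<^sup>2 \<le> (\<Sum>i\<in>A. (sqrt (a i))\<^sup>2) * (\<Sum>i\<in>A. (sqrt (b i))\<^sup>2)"
    by (rule cs_real[OF assms(1)])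
  also have "\<dots> = sum a A * sum b A" using assms by simp
  finally have "(\<Sum>i\<in>A. sqrt (a i * b i))\<^sup>2 \<le> sum a A * sum b A" by (simp add: real_sqrt_mult)
  then have "sqrt ((\<Sum>i\<in>A. sqrt (a i * b i))\<^sup>2) \<le> sqrt (sum a A * sum b A)"
    using real_sqrt_le_mono by blast
  moreover have "(\<Sum>i\<in>A. sqrt (a i * b i)) \<ge> 0"
    using assms by (intro sum_nonneg real_sqrt_ge_zero mult_nonneg_nonneg) auto
  ultimately show ?thesis by (simp add: real_sqrt_mult)
qed

lemma sum_delta_l: fixes f :: "nat \<Rightarrow> complex"
  shows "a < L \<Longrightarrow> (\<Sum>l<L. (if a = l then 1 else 0) * f l) = f a"
  by (simp add: if_distrib[of "\<lambda>t. t * f _"] sum.delta cong: if_cong)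

lemma sum_delta_r: fixes f :: "nat \<Rightarrow> complex"
  assumes "a < L" shows "(\<Sum>l<L. f l * (if a = l then 1 else 0)) = f a"
proof -
  have "(\<Sum>l<L. f l * (if a = l then 1 else 0)) = (\<Sum>l<L. if l = a then f l else 0)"
    by (rule sum.cong) auto
  also have "\<dots> = f a" using assms by (simp add: sum.delta)
  finally show ?thesis .
qed

lemma cnj_sq: "(complex_of_real (cmod u))\<^sup>2 = u * cnj u"
  by (metis complex_norm_square of_real_power)

locale dprob =
  fixes x :: "nat \<Rightarrow> nat \<Rightarrow> complex" and k :: "nat \<Rightarrow> nat \<Rightarrow> complex"
    and lam :: "nat \<Rightarrow> real" and L M :: nat
  assumes KG: "\<And>a b. a < L \<Longrightarrow> b < L \<Longrightarrow>
      (\<Sum>l<L. k a l * (\<Sum>i<M. of_real (lam i) * cnj (x i l) * x i b)) = (if a = b then 1 else 0)"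
  and GK: "\<And>c l. c < L \<Longrightarrow> l < L \<Longrightarrow>
      (\<Sum>b<L. (\<Sum>i<M. of_real (lam i) * cnj (x i c) * x i b) * k b l) = (if c = l then 1 else 0)"
  and herm: "\<And>a b. a < L \<Longrightarrow> b < L \<Longrightarrow> k b a = cnj (k a b)"
  and lam0: "\<And>i. i < M \<Longrightarrow> lam i \<ge> 0"
begin

definition g where "g c b = (\<Sum>j<M. of_real (lam j) * cnj (x j c) * x j b)"

lemma GK': "c < L \<Longrightarrow> l < L \<Longrightarrow> (\<Sum>b<L. g c b * k b l) = (if c = l then 1 else 0)"
  unfolding g_def by (rule GK)

definition w where "w i a = (\<Sum>l<L. k a l * cnj (x i l))"
definition z where "z i = (\<Sum>a<L. x i a * w i a)"
definition s where "s i j = (\<Sum>b<L. x j b * w i b)"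
definition T where "T i = (\<Sum>j<M. lam j * (cmod (s i j))\<^sup>2)"
definition pa where "pa i = (\<Sum>a<L. (cmod (x i a))\<^sup>2)"
definition pb where "pb i = lam i * (\<Sum>a<L. (cmod (w i a))\<^sup>2)"
definition pp where "pp i = lam i * T i"

lemma star: assumes "a < L" "b < L"
  shows "(\<Sum>i<M. of_real (lam i) * w i a * x i b) = (if a = b then 1 else 0)"
proof -
  have "(\<Sum>i<M. of_real (lam i) * w i a * x i b)
     = (\<Sum>i<M. \<Sum>l<L. k a l * (of_real (lam i) * cnj (x i l) * x i b))"
    by (simp add: w_def sum_distrib_left sum_distrib_right mult_ac)
  also have "\<dots> = (\<Sum>l<L. \<Sum>i<M. k a l * (of_real (lam i) * cnj (x i l) * x i b))"
    by (rule sum.swap)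
  also have "\<dots> = (\<Sum>l<L. k a l * (\<Sum>i<M. of_real (lam i) * cnj (x i l) * x i b))"
    by (simp add: sum_distrib_left)
  also have "\<dots> = (if a = b then 1 else 0)" by (rule KG[OF assms])
  finally show ?thesis .
qed

lemma sum_z: "(\<Sum>i<M. of_real (lam i) * z i) = of_nat L"
proof -
  have "(\<Sum>i<M. of_real (lam i) * z i) = (\<Sum>i<M. \<Sum>a<L. of_real (lam i) * w i a * x i a)"
    by (simp add: z_def sum_distrib_left mult_ac)
  also have "\<dots> = (\<Sum>a<L. \<Sum>i<M. of_real (lam i) * w i a * x i a)" by (rule sum.swap)
  also have "\<dots> = (\<Sum>a<L. 1)" by (rule sum.cong) (simp_all add: star)
  finally show ?thesis by simp
qed

lemma Gw: assumes "c < L"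
  shows "(\<Sum>b<L. g c b * w i b) = cnj (x i c)"
proof -
  have "(\<Sum>b<L. g c b * w i b)
     = (\<Sum>b<L. \<Sum>l<L. (g c b * k b l) * cnj (x i l))"
    by (simp add: w_def sum_distrib_left mult_ac)
  also have "\<dots> = (\<Sum>l<L. \<Sum>b<L. (g c b * k b l) * cnj (x i l))"
    by (rule sum.swap)
  also have "\<dots> = (\<Sum>l<L. (\<Sum>b<L. g c b * k b l) * cnj (x i l))"
    by (simp add: sum_distrib_right)
  also have "\<dots> = (\<Sum>l<L. (if c = l then 1 else 0) * cnj (x i l))"
    by (rule sum.cong) (simp_all add: GK'[OF assms])
  also have "\<dots> = cnj (x i c)" by (rule sum_delta_l[OF assms])
  finally show ?thesis .
qed

lemma z_T: "z i = of_real (T i)"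
proof -
  have "cnj (z i) = (\<Sum>c<L. cnj (w i c) * cnj (x i c))" by (simp add: z_def mult.commute)
  also have "\<dots> = (\<Sum>c<L. cnj (w i c) * (\<Sum>b<L. g c b * w i b))"
    by (rule sum.cong) (simp_all add: Gw)
  also have "\<dots> = (\<Sum>c<L. \<Sum>b<L. \<Sum>j<M. of_real (lam j) * (cnj (x j c * w i c) * (x j b * w i b)))"
    by (simp add: g_def sum_distrib_left sum_distrib_right mult_ac)
  also have "\<dots> = (\<Sum>c<L. \<Sum>j<M. \<Sum>b<L. of_real (lam j) * (cnj (x j c * w i c) * (x j b * w i b)))"
    by (rule sum.cong[OF refl], rule sum.swap)
  also have "\<dots> = (\<Sum>j<M. \<Sum>c<L. \<Sum>b<L. of_real (lam j) * (cnj (x j c * w i c) * (x j b * w i b)))"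
    by (rule sum.swap)
  also have "\<dots> = (\<Sum>j<M. of_real (lam j) * (cnj (s i j) * s i j))"
    by (simp add: s_def sum_distrib_left sum_distrib_right mult_ac)
  also have "\<dots> = (\<Sum>j<M. of_real (lam j * (cmod (s i j))\<^sup>2))"
    by (rule sum.cong) (simp_all add: cnj_sq mult.commute)
  also have "\<dots> = of_real (T i)" by (simp add: T_def)
  finally have "cnj (z i) = of_real (T i)" .
  then show ?thesis by (metis complex_cnj_cnj complex_cnj_complex_of_real)
qed

lemma T_nonneg: "T i \<ge> 0"
  unfolding T_def by (intro sum_nonneg mult_nonneg_nonneg) (auto simp: lam0)

lemma pp_sum: "(\<Sum>i<M. pp i) = real L"
proof -
  have "complex_of_real (\<Sum>i<M. pp i) = (\<Sum>i<M. of_real (lam i) * z i)"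
    by (simp add: pp_def z_T)
  also have "\<dots> = of_nat L" by (rule sum_z)
  finally show ?thesis by (metis of_real_eq_iff of_real_of_nat_eq)
qed

lemma pp_nonneg: "i < M \<Longrightarrow> pp i \<ge> 0"
  unfolding pp_def using T_nonneg lam0 by simp

lemma pp_le1: assumes i: "i < M" shows "pp i \<le> 1"
proof -
  have sz: "s i i = z i" by (simp add: s_def z_def)
  have "lam i * (cmod (s i i))\<^sup>2 \<le> T i"
    unfolding T_def by (rule member_le_sum) (use i lam0 in auto)
  then have le: "lam i * (T i)\<^sup>2 \<le> T i" using sz z_T T_nonneg by simp
  show ?thesis
  proof (cases "T i = 0")
    case True then show ?thesis by (simp add: pp_def)
  next
    case False
    then have "T i > 0" using T_nonneg[of i] by simp
    then have "lam i * T i \<le> 1" using le by (simp add: power2_eq_square)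
    then show ?thesis by (simp add: pp_def)
  qed
qed

lemma pp_sq: assumes i: "i < M" shows "(pp i)\<^sup>2 \<le> lam i * pa i * pb i"
proof -
  have "(cmod (z i))\<^sup>2 \<le> pa i * (\<Sum>a<L. (cmod (w i a))\<^sup>2)"
    unfolding z_def pa_def by (rule cs_complex) simp
  moreover have "cmod (z i) = T i" using z_T T_nonneg by simp
  ultimately have "(T i)\<^sup>2 \<le> pa i * (\<Sum>a<L. (cmod (w i a))\<^sup>2)" by simp
  then have "(lam i)\<^sup>2 * (T i)\<^sup>2 \<le> (lam i)\<^sup>2 * (pa i * (\<Sum>a<L. (cmod (w i a))\<^sup>2))"
    by (intro mult_left_mono) auto
  then show ?thesis by (simp add: pp_def pb_def power_mult_distrib power2_eq_square mult_ac)
qed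

lemma pa_nonneg: "pa i \<ge> 0" unfolding pa_def by (intro sum_nonneg) auto
lemma pb_nonneg: "i < M \<Longrightarrow> pb i \<ge> 0" unfolding pb_def using lam0 by (intro mult_nonneg_nonneg sum_nonneg) auto

lemma pb_sum: "complex_of_real (\<Sum>i<M. pb i) = (\<Sum>a<L. k a a)"
proof -
  have cw: "cnj (w i a) = (\<Sum>l<L. k l a * x i l)" if a: "a < L" for i a
    unfolding w_def by (simp add: herm[OF a] mult.commute)
  have "complex_of_real (\<Sum>i<M. pb i) = (\<Sum>i<M. \<Sum>a<L. of_real (lam i) * (w i a * cnj (w i a)))"
    by (simp add: pb_def sum_distrib_left cnj_sq)
  also have "\<dots> = (\<Sum>a<L. \<Sum>i<M. of_real (lam i) * (w i a * cnj (w i a)))" by (rule sum.swap)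
  also have "\<dots> = (\<Sum>a<L. \<Sum>i<M. \<Sum>l<L. k l a * (of_real (lam i) * w i a * x i l))"
    by (rule sum.cong) (simp_all add: cw sum_distrib_left mult_ac)
  also have "\<dots> = (\<Sum>a<L. \<Sum>l<L. \<Sum>i<M. k l a * (of_real (lam i) * w i a * x i l))"
    by (rule sum.cong[OF refl], rule sum.swap)
  also have "\<dots> = (\<Sum>a<L. \<Sum>l<L. k l a * (if a = l then 1 else 0))"
    by (rule sum.cong[OF refl], rule sum.cong[OF refl]) (simp add: sum_distrib_left[symmetric] star)
  also have "\<dots> = (\<Sum>a<L. k a a)"
    by (rule sum.cong) (simp_all add: sum_delta_r)
  finally show ?thesis .
qed


end

lemma units_of_inv: fixes G B :: "complex mat"
  assumes "G \<in> carrier_mat n n" "B \<in> carrier_mat n n" "G * B = 1\<^sub>m n"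
  shows "G \<in> Units (ring_mat TYPE(complex) n b)"
proof -
  have "B * G = 1\<^sub>m n" by (rule mat_mult_left_right_inverse[OF assms])
  then show ?thesis using assms unfolding Units_def ring_mat_def by auto
qed

lemma minv_eq: fixes G B :: "complex mat"
  assumes G: "G \<in> carrier_mat n n" and B: "B \<in> carrier_mat n n" and GB: "G * B = 1\<^sub>m n"
  shows "minv G = B"
proof -
  have BG: "B * G = 1\<^sub>m n" by (rule mat_mult_left_right_inverse[OF G B GB])
  have U: "G \<in> Units (ring_mat TYPE(complex) n undefined)" by (rule units_of_inv[OF G B GB])
  have "mat_inverse G \<noteq> None" using mat_inverse(1)[OF G, of undefined] U by blast
  then obtain C where C: "mat_inverse G = Some C" by auto
  from mat_inverse(2)[OF G C] have GC: "G * C = 1\<^sub>m n" and Cc: "C \<in> carrier_mat n n" by auto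
  have "C = (B * G) * C" using BG Cc by simp
  also have "\<dots> = B * (G * C)" by (rule assoc_mult_mat[OF B G Cc])
  also have "\<dots> = B" using GC B by simp
  finally show ?thesis unfolding minv_def C by simp
qed

lemma minv_invertible: fixes G :: "complex mat"
  assumes G: "G \<in> carrier_mat n n" and inv: "invertible_mat G"
  shows "G * minv G = 1\<^sub>m n" "minv G * G = 1\<^sub>m n" "minv G \<in> carrier_mat n n"
proof -
  obtain B where GB: "G * B = 1\<^sub>m (dim_row G)" and BG: "B * G = 1\<^sub>m (dim_row B)"
    using inv unfolding invertible_mat_def inverts_mat_def by blast
  have "dim_col B = n" using arg_cong[OF GB, of dim_col] G by simp
  moreover have "dim_row B = n" using arg_cong[OF BG, of dim_col] G by simp
  ultimately have B: "B \<in> carrier_mat n n" by auto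
  have GB': "G * B = 1\<^sub>m n" using GB G by simp
  have "minv G = B" by (rule minv_eq[OF G B GB'])
  then show "G * minv G = 1\<^sub>m n" "minv G * G = 1\<^sub>m n" "minv G \<in> carrier_mat n n"
    using GB' B mat_mult_left_right_inverse[OF G B GB'] by auto
qed

lemma diag_quad: fixes X :: "complex mat"
  assumes X: "X \<in> carrier_mat M L" and a: "a < L" and b: "b < L"
  shows "(mat_adjoint X * mat M M (\<lambda>(i,j). if i = j then c i else 0) * X) $$ (a,b)
     = (\<Sum>i<M. c i * cnj (X $$ (i,a)) * X $$ (i,b))"
proof -
  have D: "mat M M (\<lambda>(i,j). if i = j then c i else 0) = mat_diag M c"
    unfolding mat_diag_def by (rule eq_matI) auto
  have "mat_adjoint X * mat_diag M c = mat L M (\<lambda>(i,j). mat_adjoint X $$ (i,j) * c j)"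
    by (rule mat_diag_mult_right) (use X in simp)
  then show ?thesis unfolding D using X a b
    by (simp add: scalar_prod_def lessThan_atLeast0 mult_ac)
qed

lemma congr_diag: fixes A V U D :: "complex mat"
  assumes A: "A \<in> carrier_mat M M" and V: "V \<in> carrier_mat M M" and VV: "V * mat_adjoint V = 1\<^sub>m M"
    and VD: "mat_adjoint V * A * V = D" and U: "U \<in> carrier_mat M L"
  shows "mat_adjoint U * A * U = mat_adjoint (mat_adjoint V * U) * D * (mat_adjoint V * U)"
proof -
  have aV: "mat_adjoint V \<in> carrier_mat M M" using V by simp
  have aU: "mat_adjoint U \<in> carrier_mat L M" using U by simp
  have X: "mat_adjoint V * U \<in> carrier_mat M L" using aV U by simp
  have aX: "mat_adjoint (mat_adjoint V * U) = mat_adjoint U * V"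
    using adj_mult[OF aV U] by simp
  have AV: "A * V \<in> carrier_mat M M" using A V by simp
  have "V * D = A * V"
  proof -
    have "V * D = (V * (mat_adjoint V * A)) * V" unfolding VD[symmetric]
      using assoc_mult_mat[OF V mult_carrier_mat[OF aV A] V] by simp
    also have "V * (mat_adjoint V * A) = (V * mat_adjoint V) * A" using assoc_mult_mat[OF V aV A] by simp
    also have "\<dots> = A" using VV A by simp
    finally show ?thesis .
  qed
  have "mat_adjoint (mat_adjoint V * U) * D * (mat_adjoint V * U)
      = ((mat_adjoint U * V) * D) * (mat_adjoint V * U)" using aX by simp
  also have "(mat_adjoint U * V) * D = mat_adjoint U * (V * D)"
    using assoc_mult_mat[OF aU V] VD A V aV by (metis mult_carrier_mat)
  also have "\<dots> = mat_adjoint U * (A * V)" using \<open>V * D = A * V\<close> by simp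
  also have "(mat_adjoint U * (A * V)) * (mat_adjoint V * U) = mat_adjoint U * ((A * V) * (mat_adjoint V * U))"
    using assoc_mult_mat[OF aU AV X] .
  also have "(A * V) * (mat_adjoint V * U) = A * (V * (mat_adjoint V * U))"
    using assoc_mult_mat[OF A V X] .
  also have "V * (mat_adjoint V * U) = U"
    using assoc_mult_mat[OF V aV U] VV U by simp
  also have "mat_adjoint U * (A * U) = mat_adjoint U * A * U"
    using assoc_mult_mat[OF aU A U] by simp
  finally show ?thesis ..
qed

lemma aux_lin: fixes p c t :: real
  shows "(1 - p) * c \<le> (1 - p) * t \<Longrightarrow> c + (p - 1) * t \<le> p * c"
  by (simp add: left_diff_distrib)

lemma threshold:
  fixes mu pp :: "nat \<Rightarrow> real"
  assumes LM: "1 \<le> L" "L \<le> M"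
    and sorted: "\<And>i j. i \<le> j \<Longrightarrow> j < M \<Longrightarrow> mu j \<le> mu i"
    and pos: "\<And>l. l < L \<Longrightarrow> mu l > 0"
    and pp0: "\<And>i. i < M \<Longrightarrow> pp i \<ge> 0" and pp1: "\<And>i. i < M \<Longrightarrow> pp i \<le> 1"
    and psum: "(\<Sum>i<M. pp i) = real L"
    and ppz: "\<And>i. i < M \<Longrightarrow> mu i \<le> 0 \<Longrightarrow> pp i = 0"
  shows "(\<Sum>l<L. 1 / sqrt (mu l)) \<le> (\<Sum>i<M. pp i * (1 / sqrt (mu i)))"
proof -
  define t where "t = 1 / sqrt (mu (L - 1))"
  have muL: "mu (L - 1) > 0" using pos LM by simp
  have c1: "1 / sqrt (mu i) \<le> t" if "i < L" for i
  proof -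
    have "mu (L - 1) \<le> mu i" using sorted[of i "L - 1"] that LM by simp
    then have "sqrt (mu (L - 1)) \<le> sqrt (mu i)" by simp
    then show ?thesis unfolding t_def using muL by (simp add: frac_le)
  qed
  have c2: "pp i * t \<le> pp i * (1 / sqrt (mu i))" if "L \<le> i" "i < M" for i
  proof (cases "mu i \<le> 0")
    case True then show ?thesis using ppz that by simp
  next
    case False
    have "mu i \<le> mu (L - 1)" using sorted[of "L - 1" i] that LM by simp
    then have "sqrt (mu i) \<le> sqrt (mu (L - 1))" by simp
    then have "t \<le> 1 / sqrt (mu i)" unfolding t_def using False by (simp add: frac_le)
    then show "pp i * t \<le> pp i * (1 / sqrt (mu i))" using pp0[OF that(2)] by (rule mult_left_mono)
  qed
  have split: "{..<M} = {..<L} \<union> {L..<M}" using LM by auto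
  have "(\<Sum>i<M. pp i * (1 / sqrt (mu i))) = (\<Sum>i<L. pp i * (1 / sqrt (mu i))) + (\<Sum>i\<in>{L..<M}. pp i * (1 / sqrt (mu i)))"
    unfolding split by (rule sum.union_disjoint) auto
  also have "\<dots> \<ge> (\<Sum>i<L. 1 / sqrt (mu i) + (pp i - 1) * t) + (\<Sum>i\<in>{L..<M}. pp i * t)"
  proof (rule add_mono)
    show "(\<Sum>i<L. 1 / sqrt (mu i) + (pp i - 1) * t) \<le> (\<Sum>i<L. pp i * (1 / sqrt (mu i)))"
    proof (rule sum_mono)
      fix i assume i: "i \<in> {..<L}"
      then have "(1 - pp i) * (1 / sqrt (mu i)) \<le> (1 - pp i) * t"
        using c1[of i] pp1[of i] LM by (intro mult_left_mono) auto
      then show "1 / sqrt (mu i) + (pp i - 1) * t \<le> pp i * (1 / sqrt (mu i))"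
        by (rule aux_lin)
    qed
    show "(\<Sum>i\<in>{L..<M}. pp i * t) \<le> (\<Sum>i\<in>{L..<M}. pp i * (1 / sqrt (mu i)))"
      by (rule sum_mono) (use c2 in auto)
  qed
  also have "(\<Sum>i<L. 1 / sqrt (mu i) + (pp i - 1) * t) + (\<Sum>i\<in>{L..<M}. pp i * t)
      = (\<Sum>l<L. 1 / sqrt (mu l)) + t * ((\<Sum>i<L. pp i) + (\<Sum>i\<in>{L..<M}. pp i) - real L)"
    by (simp add: sum.distrib sum_subtractf sum_distrib_left algebra_simps)
  also have "(\<Sum>i<L. pp i) + (\<Sum>i\<in>{L..<M}. pp i) = (\<Sum>i<M. pp i)"
    unfolding split by (rule sum.union_disjoint[symmetric]) auto
  finally show ?thesis using psum by simp
qed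

lemma opt_ineq:
  fixes H V U :: "complex mat" and mu :: "nat \<Rightarrow> real"
  assumes H: "H \<in> carrier_mat NR M" and V: "V \<in> carrier_mat M M" and VV: "V * mat_adjoint V = 1\<^sub>m M"
    and VD: "mat_adjoint V * (mat_adjoint H * H) * V = mat M M (\<lambda>(i,j). if i = j then complex_of_real (mu i) else 0)"
    and LM: "1 \<le> L" "L \<le> M"
    and sorted: "\<And>i j. i \<le> j \<Longrightarrow> j < M \<Longrightarrow> mu j \<le> mu i"
    and pos: "\<And>l. l < L \<Longrightarrow> mu l > 0"
    and U: "U \<in> carrier_mat M L" and inv: "invertible_mat (gram H U)"
  shows "(\<Sum>l<L. 1 / sqrt (mu l))\<^sup>2 \<le> Re (mtrace (mat_adjoint U * U)) * Re (\<Sum>l<L. minv (gram H U) $$ (l,l))"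
proof -
  define A where "A = mat_adjoint H * H"
  have aH: "mat_adjoint H \<in> carrier_mat M NR" using H by simp
  have A: "A \<in> carrier_mat M M" unfolding A_def using mult_carrier_mat[OF aH H] .
  have aV: "mat_adjoint V \<in> carrier_mat M M" using V by simp
  have aVV: "mat_adjoint V * V = 1\<^sub>m M" by (rule mat_mult_left_right_inverse[OF V aV VV])
  define X where "X = mat_adjoint V * U"
  have X: "X \<in> carrier_mat M L" unfolding X_def using aV U by simp
  have aU: "mat_adjoint U \<in> carrier_mat L M" using U by simp
  define D where "D = mat M M (\<lambda>(i,j). if i = j then complex_of_real (mu i) else 0)"
  have gA: "gram H U = mat_adjoint U * A * U"
    unfolding gram_def A_def using assoc_mult_mat[OF aU aH H] by simp
  have gX: "gram H U = mat_adjoint X * D * X"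
    unfolding gA X_def D_def by (rule congr_diag[OF A V VV VD[folded A_def] U])
  have G: "gram H U \<in> carrier_mat L L" unfolding gA using mult_carrier_mat[OF mult_carrier_mat[OF aU A] U] .
  define K where "K = minv (gram H U)"
  have GK: "gram H U * K = 1\<^sub>m L" and KG: "K * gram H U = 1\<^sub>m L" and K: "K \<in> carrier_mat L L"
    using minv_invertible[OF G inv] unfolding K_def by auto
  have Gent: "gram H U $$ (a,b) = (\<Sum>i<M. complex_of_real (mu i) * cnj (X $$ (i,a)) * X $$ (i,b))"
    if "a < L" "b < L" for a b
    unfolding gX D_def by (rule diag_quad[OF X that])
  have mu0: "mu i \<ge> 0" if i: "i < M" for i
  proof -
    have HV: "H * V \<in> carrier_mat NR M" using H V by simp
    have "mat_adjoint (H * V) * (H * V) = (mat_adjoint V * mat_adjoint H) * (H * V)"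
      using adj_mult[OF H V] by simp
    also have "\<dots> = mat_adjoint V * (mat_adjoint H * (H * V))"
      using assoc_mult_mat[OF aV aH HV] .
    also have "mat_adjoint H * (H * V) = A * V" unfolding A_def using assoc_mult_mat[OF aH H V] by simp
    also have "mat_adjoint V * (A * V) = mat_adjoint V * A * V" using assoc_mult_mat[OF aV A V] by simp
    finally have e: "mat_adjoint (H * V) * (H * V) = mat_adjoint V * A * V" .
    have "complex_of_real (mu i) = (mat_adjoint V * A * V) $$ (i,i)" using VD i unfolding A_def by simp
    also have "\<dots> = col (H * V) i \<bullet>c col (H * V) i" unfolding e[symmetric]
      by (rule mult_adj_index[OF HV HV i i])
    finally have "mu i = Re (col (H * V) i \<bullet>c col (H * V) i)" by (metis Re_complex_of_real)
    then show ?thesis using cdot_self(2) by simp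
  qed
  have hG: "mat_adjoint (gram H U) = gram H U"
  proof (rule eq_matI)
    fix a b assume a: "a < dim_row (gram H U)" and b: "b < dim_col (gram H U)"
    have a': "a < L" and b': "b < L" using a b G by auto
    have "mat_adjoint (gram H U) $$ (a,b) = cnj (gram H U $$ (b,a))" using a b G by simp
    also have "\<dots> = gram H U $$ (a,b)" unfolding Gent[OF a' b'] Gent[OF b' a']
      by (simp add: sum_conjugate[symmetric] mult_ac)
    finally show "mat_adjoint (gram H U) $$ (a,b) = gram H U $$ (a,b)" .
  qed (use G in auto)
  have aK: "mat_adjoint K \<in> carrier_mat L L" using K by simp
  have hK: "mat_adjoint K = K"
  proof -
    have KG1: "mat_adjoint K * gram H U = 1\<^sub>m L"
      using adj_mult[OF G K] GK hG by simp
    have "mat_adjoint K = mat_adjoint K * (gram H U * K)" using GK right_mult_one_mat[OF aK] by simp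
    also have "\<dots> = (mat_adjoint K * gram H U) * K" by (rule assoc_mult_mat[OF aK G K, symmetric])
    also have "\<dots> = K" using KG1 left_mult_one_mat[OF K] by simp
    finally show ?thesis .
  qed
  have herm: "K $$ (b,a) = cnj (K $$ (a,b))" if "a < L" "b < L" for a b
  proof -
    have "K $$ (b,a) = mat_adjoint K $$ (b,a)" using hK by simp
    also have "\<dots> = cnj (K $$ (a,b))" using that K by simp
    finally show ?thesis .
  qed
  have prodent: "(P * Q) $$ (a,b) = (\<Sum>l<L. P $$ (a,l) * Q $$ (l,b))"
    if "P \<in> carrier_mat L L" "Q \<in> carrier_mat L L" "a < L" "b < L" for P Q :: "complex mat" and a b
    using that by (simp add: scalar_prod_def lessThan_atLeast0)
  interpret dp: dprob "\<lambda>i a. X $$ (i,a)" "\<lambda>a b. K $$ (a,b)" mu L M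
  proof
    fix a b assume a: "a < L" and b: "b < L"
    have "(\<Sum>l<L. K $$ (a,l) * (\<Sum>i<M. complex_of_real (mu i) * cnj (X $$ (i,l)) * X $$ (i,b)))
        = (K * gram H U) $$ (a,b)" unfolding prodent[OF K G a b] using Gent b by simp
    then show "(\<Sum>l<L. K $$ (a,l) * (\<Sum>i<M. complex_of_real (mu i) * cnj (X $$ (i,l)) * X $$ (i,b)))
        = (if a = b then 1 else 0)" unfolding KG using a b by simp
  next
    fix c l assume c: "c < L" and l: "l < L"
    have "(\<Sum>b<L. (\<Sum>i<M. complex_of_real (mu i) * cnj (X $$ (i,c)) * X $$ (i,b)) * K $$ (b,l))
        = (gram H U * K) $$ (c,l)" unfolding prodent[OF G K c l] using Gent c by simp
    then show "(\<Sum>b<L. (\<Sum>i<M. complex_of_real (mu i) * cnj (X $$ (i,c)) * X $$ (i,b)) * K $$ (b,l))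
        = (if c = l then 1 else 0)" unfolding GK using c l by simp
  next
    fix a b assume "a < L" "b < L" then show "K $$ (b,a) = cnj (K $$ (a,b))" by (rule herm)
  next
    fix i assume "i < M" then show "mu i \<ge> 0" by (rule mu0)
  qed
  have one_eq: "1\<^sub>m M = mat M M (\<lambda>(i,j). if i = j then (1::complex) else 0)" by (rule eq_matI) auto
  have "mat_adjoint U * 1\<^sub>m M * U = mat_adjoint X * (mat_adjoint V * 1\<^sub>m M * V) * X"
    unfolding X_def by (rule congr_diag[OF one_carrier_mat V VV refl U])
  also have "mat_adjoint V * 1\<^sub>m M * V = 1\<^sub>m M" using aVV right_mult_one_mat[OF aV] by simp
  finally have UU: "mat_adjoint U * U = mat_adjoint X * 1\<^sub>m M * X"
    using right_mult_one_mat[OF aU] by simp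
  have ent: "(mat_adjoint U * U) $$ (a,a) = (\<Sum>i<M. 1 * cnj (X $$ (i,a)) * X $$ (i,a))" if "a < L" for a
    unfolding UU one_eq by (rule diag_quad[OF X that that])
  have "mtrace (mat_adjoint U * U) = (\<Sum>a<L. \<Sum>i<M. 1 * cnj (X $$ (i,a)) * X $$ (i,a))"
  proof -
    have dr: "dim_row (mat_adjoint U * U) = L" using U by simp
    show ?thesis unfolding mtrace_def dr by (rule sum.cong[OF refl], rule ent) simp
  qed
  also have "\<dots> = (\<Sum>i<M. \<Sum>a<L. complex_of_real ((cmod (X $$ (i,a)))\<^sup>2))"
    by (subst sum.swap) (simp add: cnj_sq mult.commute)
  finally have trU: "Re (mtrace (mat_adjoint U * U)) = (\<Sum>i<M. dp.pa i)"
    unfolding dp.pa_def by simp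
  have trK: "Re (\<Sum>l<L. minv (gram H U) $$ (l,l)) = (\<Sum>i<M. dp.pb i)"
    using arg_cong[OF dp.pb_sum, of Re] unfolding K_def by simp
  have "(\<Sum>l<L. 1 / sqrt (mu l)) \<le> (\<Sum>i<M. dp.pp i * (1 / sqrt (mu i)))"
  proof (rule threshold[OF LM sorted pos])
    show "\<And>i. i < M \<Longrightarrow> 0 \<le> dp.pp i" by (rule dp.pp_nonneg)
    show "\<And>i. i < M \<Longrightarrow> dp.pp i \<le> 1" by (rule dp.pp_le1)
    show "(\<Sum>i<M. dp.pp i) = real L" by (rule dp.pp_sum)
    show "\<And>i. i < M \<Longrightarrow> mu i \<le> 0 \<Longrightarrow> dp.pp i = 0"
      using mu0 by (simp add: dp.pp_def) (metis antisym mult_zero_left)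
  qed (auto)
  also have "\<dots> \<le> (\<Sum>i<M. sqrt (dp.pa i * dp.pb i))"
  proof (rule sum_mono)
    fix i assume "i \<in> {..<M}"
    then have i: "i < M" by simp
    show "dp.pp i * (1 / sqrt (mu i)) \<le> sqrt (dp.pa i * dp.pb i)"
    proof (cases "mu i = 0")
      case True then show ?thesis using dp.pa_nonneg[of i] dp.pb_nonneg[OF i] by simp
    next
      case False
      then have mp: "mu i > 0" using mu0[OF i] by simp
      have "(dp.pp i)\<^sup>2 \<le> mu i * dp.pa i * dp.pb i" by (rule dp.pp_sq[OF i])
      then have "(dp.pp i)\<^sup>2 / mu i \<le> dp.pa i * dp.pb i" using mp by (simp add: divide_le_eq mult_ac)
      then have "sqrt ((dp.pp i)\<^sup>2 / mu i) \<le> sqrt (dp.pa i * dp.pb i)" by simp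
      moreover have "sqrt ((dp.pp i)\<^sup>2 / mu i) = dp.pp i * (1 / sqrt (mu i))"
        using dp.pp_nonneg[OF i] mp by (simp add: real_sqrt_divide)
      ultimately show ?thesis by simp
    qed
  qed
  also have "\<dots> \<le> sqrt (\<Sum>i<M. dp.pa i) * sqrt (\<Sum>i<M. dp.pb i)"
    by (rule cs_sqrt) (auto simp: dp.pa_nonneg dp.pb_nonneg)
  finally have main: "(\<Sum>l<L. 1 / sqrt (mu l)) \<le> sqrt (\<Sum>i<M. dp.pa i) * sqrt (\<Sum>i<M. dp.pb i)" .
  have S0: "0 \<le> (\<Sum>l<L. 1 / sqrt (mu l))" using pos by (intro sum_nonneg) (simp add: less_imp_le)
  have sa: "(\<Sum>i<M. dp.pa i) \<ge> 0" by (intro sum_nonneg) (simp add: dp.pa_nonneg)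
  have sb: "(\<Sum>i<M. dp.pb i) \<ge> 0" by (intro sum_nonneg) (simp add: dp.pb_nonneg)
  have "(\<Sum>l<L. 1 / sqrt (mu l))\<^sup>2 \<le> (sqrt (\<Sum>i<M. dp.pa i) * sqrt (\<Sum>i<M. dp.pb i))\<^sup>2"
    using main S0 by (intro power_mono) auto
  also have "\<dots> = (\<Sum>i<M. dp.pa i) * (\<Sum>i<M. dp.pb i)"
    using sa sb by (simp add: power_mult_distrib)
  finally show ?thesis unfolding trU trK .
qed

lemma adj_sandwich: fixes Z W A :: "complex mat"
  assumes Z: "Z \<in> carrier_mat p q" and W: "W \<in> carrier_mat q r" and A: "A \<in> carrier_mat p p"
  shows "mat_adjoint (Z * W) * A * (Z * W) = mat_adjoint W * (mat_adjoint Z * A * Z) * W"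
proof -
  have aZ: "mat_adjoint Z \<in> carrier_mat q p" using Z by simp
  have aW: "mat_adjoint W \<in> carrier_mat r q" using W by simp
  have ZW: "Z * W \<in> carrier_mat p r" using Z W by simp
  have AZW: "A * (Z * W) \<in> carrier_mat p r" using A ZW by simp
  have aZA: "mat_adjoint Z * A \<in> carrier_mat q p" using aZ A by simp
  have aZAZ: "mat_adjoint Z * A * Z \<in> carrier_mat q q" using aZA Z by simp
  have "mat_adjoint (Z * W) * A * (Z * W) = ((mat_adjoint W * mat_adjoint Z) * A) * (Z * W)"
    using adj_mult[OF Z W] by simp
  also have "\<dots> = (mat_adjoint W * mat_adjoint Z) * (A * (Z * W))"
    using assoc_mult_mat[OF mult_carrier_mat[OF aW aZ] A ZW] .
  also have "\<dots> = mat_adjoint W * (mat_adjoint Z * (A * (Z * W)))"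
    using assoc_mult_mat[OF aW aZ AZW] .
  also have "mat_adjoint Z * (A * (Z * W)) = (mat_adjoint Z * A) * (Z * W)"
    using assoc_mult_mat[OF aZ A ZW] by simp
  also have "\<dots> = ((mat_adjoint Z * A) * Z) * W"
    using assoc_mult_mat[OF aZA Z W] by simp
  also have "mat_adjoint W * (((mat_adjoint Z * A) * Z) * W) = mat_adjoint W * (mat_adjoint Z * A * Z) * W"
    using assoc_mult_mat[OF aW aZAZ W] by simp
  finally show ?thesis .
qed

lemma unit_conj_mult: fixes S D E :: "complex mat"
  assumes S: "S \<in> carrier_mat L L" and SS: "mat_adjoint S * S = 1\<^sub>m L"
    and D: "D \<in> carrier_mat L L" and E: "E \<in> carrier_mat L L"
  shows "(S * D * mat_adjoint S) * (S * E * mat_adjoint S) = S * (D * E) * mat_adjoint S"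
proof -
  have aS: "mat_adjoint S \<in> carrier_mat L L" using S by simp
  have SD: "S * D \<in> carrier_mat L L" using S D by simp
  have SE: "S * E \<in> carrier_mat L L" using S E by simp
  have "(S * D * mat_adjoint S) * (S * E * mat_adjoint S) = (S * D) * (mat_adjoint S * ((S * E) * mat_adjoint S))"
    using assoc_mult_mat[OF SD aS mult_carrier_mat[OF SE aS]] .
  also have "mat_adjoint S * ((S * E) * mat_adjoint S) = (mat_adjoint S * (S * E)) * mat_adjoint S"
    using assoc_mult_mat[OF aS SE aS] by simp
  also have "mat_adjoint S * (S * E) = (mat_adjoint S * S) * E" using assoc_mult_mat[OF aS S E] by simp
  also have "\<dots> = E" using SS E by simp
  also have "(S * D) * (E * mat_adjoint S) = S * (D * (E * mat_adjoint S))"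
    using assoc_mult_mat[OF S D mult_carrier_mat[OF E aS]] .
  also have "D * (E * mat_adjoint S) = (D * E) * mat_adjoint S" using assoc_mult_mat[OF D E aS] by simp
  also have "S * ((D * E) * mat_adjoint S) = S * (D * E) * mat_adjoint S"
    using assoc_mult_mat[OF S mult_carrier_mat[OF D E] aS] by simp
  finally show ?thesis .
qed

lemma unit_conj_diag_entry: fixes S :: "complex mat"
  assumes S: "S \<in> carrier_mat L L" and l: "l < L"
  shows "(S * mat_diag L d * mat_adjoint S) $$ (l,l) = (\<Sum>k<L. d k * complex_of_real ((cmod (S $$ (l,k)))\<^sup>2))"
proof -
  have "S * mat_diag L d = mat L L (\<lambda>(i,j). S $$ (i,j) * d j)" by (rule mat_diag_mult_right[OF S])
  then show ?thesis using S l by (simp add: scalar_prod_def lessThan_atLeast0 cnj_sq mult_ac)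
qed

lemma unit_conj_diag_trace: fixes S :: "complex mat"
  assumes S: "S \<in> carrier_mat L L" and SS: "mat_adjoint S * S = 1\<^sub>m L"
  shows "(\<Sum>l<L. (S * mat_diag L d * mat_adjoint S) $$ (l,l)) = (\<Sum>k<L. d k)"
proof -
  have col1: "(\<Sum>l<L. complex_of_real ((cmod (S $$ (l,k)))\<^sup>2)) = 1" if k: "k < L" for k
  proof -
    have "(mat_adjoint S * S) $$ (k,k) = col S k \<bullet>c col S k" by (rule mult_adj_index[OF S S k k])
    also have "\<dots> = (\<Sum>l<L. complex_of_real ((cmod (S $$ (l,k)))\<^sup>2))"
      using S k by (simp add: scalar_prod_def lessThan_atLeast0 cnj_sq)
    finally show ?thesis using SS k by simp
  qed
  have "(\<Sum>l<L. (S * mat_diag L d * mat_adjoint S) $$ (l,l))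
     = (\<Sum>l<L. \<Sum>k<L. d k * complex_of_real ((cmod (S $$ (l,k)))\<^sup>2))"
    by (rule sum.cong[OF refl], rule unit_conj_diag_entry[OF S]) simp
  also have "\<dots> = (\<Sum>k<L. d k * (\<Sum>l<L. complex_of_real ((cmod (S $$ (l,k)))\<^sup>2)))"
    by (subst sum.swap) (simp add: sum_distrib_left)
  also have "\<dots> = (\<Sum>k<L. d k)"
  proof (rule sum.cong[OF refl])
    fix k assume "k \<in> {..<L}"
    then have k: "k < L" by simp
    show "d k * (\<Sum>l<L. complex_of_real ((cmod (S $$ (l,k)))\<^sup>2)) = d k"
      by (simp only: col1[OF k] mult_1_right)
  qed
  finally show ?thesis .
qed

lemma V1_diag: fixes A V1 :: "complex mat"
  assumes A: "A \<in> carrier_mat M M" and V1: "V1 \<in> carrier_mat M L" and VV: "mat_adjoint V1 * V1 = 1\<^sub>m L"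
    and ev: "\<forall>l<L. A *\<^sub>v col V1 l = complex_of_real (lamH l) \<cdot>\<^sub>v col V1 l"
  shows "mat_adjoint V1 * A * V1 = mat_diag L (\<lambda>l. complex_of_real (lamH l))"
proof -
  have aV: "mat_adjoint V1 \<in> carrier_mat L M" using V1 by simp
  have AV: "A * V1 \<in> carrier_mat M L" using A V1 by simp
  have e: "mat_adjoint V1 * A * V1 = mat_adjoint V1 * (A * V1)" by (rule assoc_mult_mat[OF aV A V1])
  show ?thesis unfolding e
  proof (rule eq_matI)
    fix a b assume a: "a < dim_row (mat_diag L (\<lambda>l. complex_of_real (lamH l)))"
      and b: "b < dim_col (mat_diag L (\<lambda>l. complex_of_real (lamH l)))"
    have a': "a < L" and b': "b < L" using a b by (auto simp: mat_diag_def)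
    have "(mat_adjoint V1 * (A * V1)) $$ (a,b) = col (A * V1) b \<bullet>c col V1 a"
      by (rule mult_adj_index[OF V1 AV a' b'])
    also have "col (A * V1) b = complex_of_real (lamH b) \<cdot>\<^sub>v col V1 b"
      using ev b' by (simp only: col_mult2[OF A V1 b'])
    also have "(complex_of_real (lamH b) \<cdot>\<^sub>v col V1 b) \<bullet>c col V1 a = complex_of_real (lamH b) * (col V1 b \<bullet>c col V1 a)"
      using V1 a' b' by (simp add: scalar_prod_def sum_distrib_left mult.assoc)
    also have "col V1 b \<bullet>c col V1 a = (mat_adjoint V1 * V1) $$ (a,b)"
      by (rule mult_adj_index[OF V1 V1 a' b', symmetric])
    also have "\<dots> = (if a = b then 1 else 0)" using VV a' b' by simp
    finally show "(mat_adjoint V1 * (A * V1)) $$ (a,b) = mat_diag L (\<lambda>l. complex_of_real (lamH l)) $$ (a,b)"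
      using a' b' by (simp add: mat_diag_def)
  qed (use aV AV in \<open>auto simp: mat_diag_def\<close>)
qed

lemma adj_diag_real: "mat_adjoint (mat_diag L (\<lambda>l. complex_of_real (f l))) = mat_diag L (\<lambda>l. complex_of_real (f l))"
  by (rule eq_matI) (auto simp: mat_diag_def)

lemma dft_sum: assumes n: "n > 0" and a: "a < n" and b: "b < n" and ab: "a \<noteq> b"
  shows "(\<Sum>j<n. cis (2 * pi * real j * (real b - real a) / real n)) = 0"
proof -
  define \<omega> where "\<omega> = cis (2 * pi * (real b - real a) / real n)"
  have w1: "\<omega> \<noteq> 1"
  proof
    assume "\<omega> = 1"
    then have "cos (2 * pi * (real b - real a) / real n) = 1" by (simp add: \<omega>_def complex_eq_iff)
    then obtain m :: int where m: "2 * pi * (real b - real a) / real n = real_of_int m * 2 * pi"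
      by (subst (asm) cos_one_2pi_int) blast
    hence "real_of_int (int b - int a) = real_of_int (m * int n)"
      unfolding of_int_diff of_int_mult using n by (simp add: nonzero_divide_eq_eq)
    hence *: "int b - int a = m * int n" by (simp only: of_int_eq_iff)
    then have "abs m * int n = abs (int b - int a)" by (simp add: abs_mult)
    also have "\<dots> < int n" using a b by linarith
    finally have "m = 0" using n by (simp add: mult_less_cancel_right1)
    with * ab show False by simp
  qed
  have "(\<Sum>j<n. cis (2 * pi * real j * (real b - real a) / real n)) = (\<Sum>j<n. \<omega> ^ j)"
    by (intro sum.cong refl) (auto simp: \<omega>_def DeMoivre mult_ac)
  also have "\<dots> = (\<omega> ^ n - 1) / (\<omega> - 1)" by (rule geometric_sum[OF w1])
  also have "\<omega> ^ n = cis (2 * pi * (real b - real a))" using n by (simp add: \<omega>_def DeMoivre)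
  also have "\<dots> = 1"
  proof -
    have "real b - real a \<in> \<int>" by simp
    then show ?thesis by (rule cis_multiple_2pi)
  qed
  finally show ?thesis by simp
qed

definition dft :: "nat \<Rightarrow> complex mat" where
  "dft n = mat n n (\<lambda>(j,k). complex_of_real (1 / sqrt (real n)) * cis (2 * pi * real j * real k / real n))"

lemma dft_unitary: assumes n: "n > 0" shows "dft n \<in> carrier_mat n n" "mat_adjoint (dft n) * dft n = 1\<^sub>m n"
proof -
  show Sc: "dft n \<in> carrier_mat n n" unfolding dft_def by simp
  show "mat_adjoint (dft n) * dft n = 1\<^sub>m n"
  proof (rule eq_matI)
    fix a b assume a: "a < dim_row (1\<^sub>m n :: complex mat)" and b: "b < dim_col (1\<^sub>m n :: complex mat)"
    have a': "a < n" and b': "b < n" using a b by auto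
    have "(mat_adjoint (dft n) * dft n) $$ (a,b) = (\<Sum>j<n. cnj (dft n $$ (j,a)) * dft n $$ (j,b))"
      using Sc a' b' by (simp add: scalar_prod_def lessThan_atLeast0)
    also have "\<dots> = (\<Sum>j<n. complex_of_real (1 / real n) * cis (2 * pi * real j * (real b - real a) / real n))"
    proof (rule sum.cong[OF refl])
      fix j assume "j \<in> {..<n}"
      then have j: "j < n" by simp
      have "cnj (dft n $$ (j,a)) * dft n $$ (j,b) =
        (complex_of_real (1 / sqrt (real n)) * complex_of_real (1 / sqrt (real n))) *
        (cis (- (2 * pi * real j * real a / real n)) * cis (2 * pi * real j * real b / real n))"
        unfolding dft_def using j a' b' by (simp add: cis_cnj mult_ac)
      also have "complex_of_real (1 / sqrt (real n)) * complex_of_real (1 / sqrt (real n)) = complex_of_real (1 / real n)"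
        using n by (simp flip: of_real_mult)
      also have "cis (- (2 * pi * real j * real a / real n)) * cis (2 * pi * real j * real b / real n)
          = cis (2 * pi * real j * (real b - real a) / real n)"
        by (simp add: cis_mult algebra_simps diff_divide_distrib)
      finally show "cnj (dft n $$ (j,a)) * dft n $$ (j,b) =
          complex_of_real (1 / real n) * cis (2 * pi * real j * (real b - real a) / real n)" .
    qed
    also have "\<dots> = 1\<^sub>m n $$ (a,b)"
    proof (cases "a = b")
      case True then show ?thesis using n a' by simp
    next
      case False
      have "(\<Sum>j<n. complex_of_real (1 / real n) * cis (2 * pi * real j * (real b - real a) / real n))
          = complex_of_real (1 / real n) * (\<Sum>j<n. cis (2 * pi * real j * (real b - real a) / real n))"
        by (rule sum_distrib_left[symmetric])
      then show ?thesis using dft_sum[OF n a' b' False] a' b' False by simp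
    qed
    finally show "(mat_adjoint (dft n) * dft n) $$ (a,b) = 1\<^sub>m n $$ (a,b)" .
  qed (use Sc in auto)
qed

lemma dft_abs: assumes "j < n" "k < n" shows "(cmod (dft n $$ (j,k)))\<^sup>2 = 1 / real n"
  using assms unfolding dft_def by (simp add: norm_mult norm_divide power_divide)


lemma prod_upt: "(\<Prod>i\<leftarrow>[0..<n]. f i) = (\<Prod>i<n. f i)"
  by (induct n) simp_all

lemma trace_nonneg: fixes U :: "complex mat" assumes U: "U \<in> carrier_mat M L"
  shows "Re (mtrace (mat_adjoint U * U)) \<ge> 0"
proof -
  have dr: "dim_row (mat_adjoint U * U) = L" using U by simp
  have "mtrace (mat_adjoint U * U) = (\<Sum>a<L. col U a \<bullet>c col U a)"
    unfolding mtrace_def dr by (rule sum.cong[OF refl], rule mult_adj_index[OF U U]) auto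
  then have "Re (mtrace (mat_adjoint U * U)) = (\<Sum>a<L. Re (col U a \<bullet>c col U a))" by simp
  also have "\<dots> \<ge> 0" by (intro sum_nonneg cdot_self(2))
  finally show ?thesis .
qed

theorem proposition1:
  fixes \<sigma>2 \<gamma> \<nu> :: real and n NR M L :: nat
    and H V1 :: "complex mat" and lamH lamU :: "nat \<Rightarrow> real"
  assumes "\<sigma>2 > 0" and "\<gamma> > 0" and "n \<ge> 1"
    and H: "H \<in> carrier_mat NR M"
    and L: "L \<ge> 1" "L \<le> vec_space.rank NR H"
    and eig: "\<exists>\<mu> :: nat \<Rightarrow> real.
              char_poly (mat_adjoint H * H) = (\<Prod>i<M. [:- complex_of_real (\<mu> i), 1:]) \<and>
              (\<forall>i j. i \<le> j \<longrightarrow> j < M \<longrightarrow> \<mu> j \<le> \<mu> i) \<and>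
              (\<forall>l<L. lamH l = \<mu> l)"
    and lamH_pos: "\<forall>l<L. lamH l > 0"
    and V1: "V1 \<in> carrier_mat M L" "mat_adjoint V1 * V1 = 1\<^sub>m L"
    and V1_eig: "\<forall>l<L. (mat_adjoint H * H) *\<^sub>v col V1 l = complex_of_real (lamH l) \<cdot>\<^sub>v col V1 l"
    and \<nu>: "\<nu> > 0" "(\<Sum>l<L. \<sigma>2 / (lamU l * lamH l)) = \<gamma> / real n"
    and lamU: "\<forall>l<L. lamU l = sqrt (\<nu> * \<sigma>2 / lamH l)"
  shows
    "(\<forall>S. unitary_mat L S \<longrightarrow>
        (let U = V1 * mat_diag L (\<lambda>l. complex_of_real (sqrt (lamU l))) * mat_adjoint S in
          feasible \<sigma>2 \<gamma> n H M L U \<and>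
          (\<forall>U'. feasible \<sigma>2 \<gamma> n H M L U' \<longrightarrow>
                 Re (mtrace (mat_adjoint U * U)) \<le> Re (mtrace (mat_adjoint U' * U'))) \<and>
          mtrace (mat_adjoint U * U) = complex_of_real (\<Sum>l<L. lamU l))) \<and>
     (\<exists>S. unitary_mat L S \<and>
        (let U = V1 * mat_diag L (\<lambda>l. complex_of_real (sqrt (lamU l))) * mat_adjoint S in
          \<forall>l<L. complex_of_real \<sigma>2 * minv (gram H U) $$ (l, l)
                 = complex_of_real ((1 / real L) * (\<gamma> / real n))))"

proof -
  obtain mu :: "nat \<Rightarrow> real" where cp: "char_poly (mat_adjoint H * H) = (\<Prod>i<M. [:- complex_of_real (mu i), 1:])"
    and sorted0: "\<forall>i j. i \<le> j \<longrightarrow> j < M \<longrightarrow> mu j \<le> mu i" and lmu: "\<forall>l<L. lamH l = mu l"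
    using eig by blast
  have sorted: "\<And>i j. i \<le> j \<Longrightarrow> j < M \<Longrightarrow> mu j \<le> mu i" using sorted0 by blast
  have sp: "\<sigma>2 > 0" and gp: "\<gamma> > 0" and np: "n \<ge> 1" by fact+
  define A where "A = mat_adjoint H * H"
  have aH: "mat_adjoint H \<in> carrier_mat M NR" using H by simp
  have A: "A \<in> carrier_mat M M" unfolding A_def using mult_carrier_mat[OF aH H] .
  have hA: "mat_adjoint A = A" unfolding A_def using adj_mult[OF aH H] by simp
  have LM: "L \<le> M"
  proof -
    have "vec_space.rank NR H \<le> M" by (rule vec_space.rank_le_nc[OF H])
    then show ?thesis using L by simp
  qed
  define es where "es = map (\<lambda>i. complex_of_real (mu i)) [0..<M]"
  have cp': "char_poly A = (\<Prod>e\<leftarrow>es. [:- e, 1:])"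
    unfolding es_def A_def cp by (simp add: o_def prod_upt)
  obtain V where V: "V \<in> carrier_mat M M" and VV: "V * mat_adjoint V = 1\<^sub>m M"
    and VD0: "mat_adjoint V * A * V = mat M M (\<lambda>(i,j). if i = j then es!i else 0)"
    using spectral[OF A hA cp'] by blast
  have VD: "mat_adjoint V * (mat_adjoint H * H) * V = mat M M (\<lambda>(i,j). if i = j then complex_of_real (mu i) else 0)"
    unfolding VD0[unfolded A_def] by (rule eq_matI) (auto simp: es_def)
  have pos: "\<And>l. l < L \<Longrightarrow> mu l > 0" using lamH_pos lmu by auto
  have L1: "1 \<le> L" using L by simp
  define Sc where "Sc = (\<Sum>l<L. 1 / sqrt (mu l))"
  define q where "q = sqrt (\<nu> * \<sigma>2)"
  have qp: "q > 0" unfolding q_def using \<nu> sp by simp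
  have lamU_eq: "lamU l = q * (1 / sqrt (mu l))" if l: "l < L" for l
    using lamU l lmu unfolding q_def by (simp add: real_sqrt_divide)
  have term_eq: "\<sigma>2 / (lamU l * lamH l) = \<sigma>2 / q * (1 / sqrt (mu l))" if l: "l < L" for l
  proof -
    have m: "mu l > 0" using pos l by simp
    have s: "sqrt (mu l) * sqrt (mu l) = mu l" using m by simp
    have "lamU l * lamH l = q * ((1 / sqrt (mu l)) * (sqrt (mu l) * sqrt (mu l)))"
      using lamU_eq[OF l] lmu l s by simp
    also have "\<dots> = q * (mu l / sqrt (mu l))" using s by simp
    also have "\<dots> = q * sqrt (mu l)" using m by (simp add: real_div_sqrt)
    finally have "lamU l * lamH l = q * sqrt (mu l)" .
    then show ?thesis using m qp by (simp add: field_simps)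
  qed
  have gSc: "\<gamma> / real n = \<sigma>2 / q * Sc"
    using \<nu>(2) unfolding Sc_def by (simp add: term_eq sum_distrib_left)
  have sumU: "(\<Sum>l<L. lamU l) = q * Sc" unfolding Sc_def by (simp add: lamU_eq sum_distrib_left)
  have Scp: "Sc > 0" unfolding Sc_def using pos L1 by (intro sum_pos) (auto simp: set_eq_iff intro: exI[of _ 0])
  have sumU2: "(\<Sum>l<L. lamU l) = \<sigma>2 * Sc\<^sup>2 / (\<gamma> / real n)"
    unfolding sumU gSc Sc_def[symmetric] using sp qp Scp by (simp add: field_simps power2_eq_square)
  have LB: "(\<Sum>l<L. lamU l) \<le> Re (mtrace (mat_adjoint U' * U'))" if f: "feasible \<sigma>2 \<gamma> n H M L U'" for U'
  proof -
    have U': "U' \<in> carrier_mat M L" and inv: "invertible_mat (gram H U')"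
      and c: "Re (\<Sum>l<L. complex_of_real \<sigma>2 * minv (gram H U') $$ (l, l)) \<le> \<gamma> / real n"
      using f unfolding feasible_def by auto
    define T where "T = Re (mtrace (mat_adjoint U' * U'))"
    define P where "P = Re (\<Sum>l<L. minv (gram H U') $$ (l,l))"
    have oi: "Sc\<^sup>2 \<le> T * P" unfolding T_def P_def Sc_def
      by (rule opt_ineq[OF H V VV VD L1 LM sorted pos U' inv])
    have "Re (\<Sum>l<L. complex_of_real \<sigma>2 * minv (gram H U') $$ (l, l)) = \<sigma>2 * P"
      unfolding P_def by (simp add: sum_distrib_left[symmetric] Re_sum)
    with c have "\<sigma>2 * P \<le> \<gamma> / real n" by simp
    moreover have T0: "T \<ge> 0" unfolding T_def by (rule trace_nonneg[OF U'])
    ultimately have "\<sigma>2 * Sc\<^sup>2 \<le> T * (\<gamma> / real n)"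
    proof -
      assume c2: "\<sigma>2 * P \<le> \<gamma> / real n" and T0: "T \<ge> 0"
      have "\<sigma>2 * Sc\<^sup>2 \<le> \<sigma>2 * (T * P)" using oi sp by (intro mult_left_mono) auto
      also have "\<dots> = T * (\<sigma>2 * P)" by (simp add: mult_ac)
      also have "\<dots> \<le> T * (\<gamma> / real n)" using c2 T0 by (intro mult_left_mono)
      finally show ?thesis .
    qed
    moreover have gn: "\<gamma> / real n > 0" using gp np by simp
    ultimately have "\<sigma>2 * Sc\<^sup>2 / (\<gamma> / real n) \<le> T" by (simp only: pos_divide_le_eq)
    then show ?thesis unfolding sumU2 T_def .
  qed
  have lamU0: "lamU l \<ge> 0" if "l < L" for l using lamU_eq[OF that] qp pos[OF that] by simp
  have lamUp: "lamU l > 0" if "l < L" for l using lamU_eq[OF that] qp pos[OF that] by simp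
  have lamHp: "lamH l > 0" if "l < L" for l using lamH_pos that by simp
  define Lam where "Lam = mat_diag L (\<lambda>l. complex_of_real (sqrt (lamU l)))"
  have Lam: "Lam \<in> carrier_mat L L" unfolding Lam_def by simp
  have aLam: "mat_adjoint Lam = Lam" unfolding Lam_def by (rule adj_diag_real)
  have DH: "mat_adjoint V1 * A * V1 = mat_diag L (\<lambda>l. complex_of_real (lamH l))"
    by (rule V1_diag[OF A V1 V1_eig[folded A_def]])
  have V1one: "mat_adjoint V1 * 1\<^sub>m M * V1 = 1\<^sub>m L" using V1 by simp
  define D2 where "D2 = mat_diag L (\<lambda>l. complex_of_real (lamU l * lamH l))"
  define Dinv where "Dinv = mat_diag L (\<lambda>l. complex_of_real (1 / (lamU l * lamH l)))"
  define DU where "DU = mat_diag L (\<lambda>l. complex_of_real (lamU l))"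
  have LDL: "Lam * mat_diag L (\<lambda>l. complex_of_real (lamH l)) * Lam = D2"
    unfolding Lam_def D2_def mat_diag_diag by (rule eq_matI) (auto simp: mat_diag_def lamU0 simp flip: of_real_mult)
  have LL: "Lam * 1\<^sub>m L * Lam = DU"
    unfolding Lam_def DU_def mat_diag_one[symmetric, of L] mat_diag_diag
    by (rule eq_matI) (auto simp: mat_diag_def lamU0 simp flip: of_real_mult)
  have DD: "D2 * Dinv = 1\<^sub>m L"
    unfolding D2_def Dinv_def mat_diag_one[symmetric, of L] mat_diag_diag
    by (rule eq_matI) (auto simp: mat_diag_def simp flip: of_real_mult dest: lamUp lamHp)
  have constr: "U \<in> carrier_mat M L \<and> gram H U = S * D2 * mat_adjoint S \<and>
      minv (gram H U) = S * Dinv * mat_adjoint S \<and> invertible_mat (gram H U) \<and>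
      mat_adjoint U * U = S * DU * mat_adjoint S"
    if S: "S \<in> carrier_mat L L" and SS: "mat_adjoint S * S = 1\<^sub>m L"
      and Udef: "U = V1 * mat_diag L (\<lambda>l. complex_of_real (sqrt (lamU l))) * mat_adjoint S" for S U
  proof -
    have aS: "mat_adjoint S \<in> carrier_mat L L" using S by simp
    have SS': "S * mat_adjoint S = 1\<^sub>m L" by (rule mat_mult_left_right_inverse[OF aS S SS])
    have VL: "V1 * Lam \<in> carrier_mat M L" using V1 Lam by simp
    have U: "U \<in> carrier_mat M L" unfolding Udef Lam_def[symmetric] using mult_carrier_mat[OF VL aS] .
    have aU: "mat_adjoint U \<in> carrier_mat L M" using U by simp
    have sand: "mat_adjoint U * B * U = S * (Lam * (mat_adjoint V1 * B * V1) * Lam) * mat_adjoint S"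
      if B: "B \<in> carrier_mat M M" for B
    proof -
      have "mat_adjoint U * B * U = mat_adjoint (mat_adjoint S) * (mat_adjoint (V1 * Lam) * B * (V1 * Lam)) * mat_adjoint S"
        unfolding Udef Lam_def[symmetric] by (rule adj_sandwich[OF VL aS B])
      also have "mat_adjoint (V1 * Lam) * B * (V1 * Lam) = mat_adjoint Lam * (mat_adjoint V1 * B * V1) * Lam"
        by (rule adj_sandwich[OF V1(1) Lam B])
      finally show ?thesis unfolding aLam by simp
    qed
    have g: "gram H U = S * D2 * mat_adjoint S"
    proof -
      have "gram H U = mat_adjoint U * A * U"
        unfolding gram_def A_def using assoc_mult_mat[OF aU aH H] by simp
      also have "\<dots> = S * D2 * mat_adjoint S" unfolding sand[OF A] DH LDL ..
      finally show ?thesis .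
    qed
    have D2c: "D2 \<in> carrier_mat L L" and Dic: "Dinv \<in> carrier_mat L L" and DUc: "DU \<in> carrier_mat L L"
      unfolding D2_def Dinv_def DU_def by simp_all
    have Gc: "gram H U \<in> carrier_mat L L" unfolding g using mult_carrier_mat[OF mult_carrier_mat[OF S D2c] aS] .
    have Kc: "S * Dinv * mat_adjoint S \<in> carrier_mat L L" using mult_carrier_mat[OF mult_carrier_mat[OF S Dic] aS] .
    have GK: "gram H U * (S * Dinv * mat_adjoint S) = 1\<^sub>m L"
      unfolding g unit_conj_mult[OF S SS D2c Dic] DD using SS' right_mult_one_mat[OF S] by simp
    have KG: "(S * Dinv * mat_adjoint S) * gram H U = 1\<^sub>m L"
      by (rule mat_mult_left_right_inverse[OF Gc Kc GK])
    have mi: "minv (gram H U) = S * Dinv * mat_adjoint S" by (rule minv_eq[OF Gc Kc GK])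
    have inv: "invertible_mat (gram H U)"
      unfolding invertible_mat_def inverts_mat_def square_mat.simps
      using GK KG Gc Kc by (intro conjI exI[of _ "S * Dinv * mat_adjoint S"]) auto
    have UU: "mat_adjoint U * U = S * DU * mat_adjoint S"
    proof -
      have "mat_adjoint U * U = mat_adjoint U * 1\<^sub>m M * U" using right_mult_one_mat[OF aU] by simp
      also have "\<dots> = S * DU * mat_adjoint S" unfolding sand[OF one_carrier_mat] V1one LL ..
      finally show ?thesis .
    qed
    show ?thesis using U g mi inv UU by blast
  qed
  have Kdiag: "(\<Sum>l<L. (S * Dinv * mat_adjoint S) $$ (l,l)) = complex_of_real (\<Sum>l<L. 1 / (lamU l * lamH l))"
    if S: "S \<in> carrier_mat L L" and SS: "mat_adjoint S * S = 1\<^sub>m L" for S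
    unfolding Dinv_def unit_conj_diag_trace[OF S SS] by simp
  have trU: "(\<Sum>l<L. (S * DU * mat_adjoint S) $$ (l,l)) = complex_of_real (\<Sum>l<L. lamU l)"
    if S: "S \<in> carrier_mat L L" and SS: "mat_adjoint S * S = 1\<^sub>m L" for S
    unfolding DU_def unit_conj_diag_trace[OF S SS] by simp
  have s2: "\<sigma>2 * (\<Sum>l<L. 1 / (lamU l * lamH l)) = \<gamma> / real n"
    unfolding \<nu>(2)[symmetric] by (simp add: sum_distrib_left)
  show ?thesis
  proof (intro conjI allI impI)
    fix S assume uS: "unitary_mat L S"
    then have S: "S \<in> carrier_mat L L" and SS: "mat_adjoint S * S = 1\<^sub>m L" unfolding unitary_mat_def by auto
    define U where "U = V1 * mat_diag L (\<lambda>l. complex_of_real (sqrt (lamU l))) * mat_adjoint S"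
    from constr[OF S SS U_def] have U: "U \<in> carrier_mat M L" and g: "gram H U = S * D2 * mat_adjoint S"
      and mi: "minv (gram H U) = S * Dinv * mat_adjoint S" and inv: "invertible_mat (gram H U)"
      and UU: "mat_adjoint U * U = S * DU * mat_adjoint S" by auto
    have tr: "mtrace (mat_adjoint U * U) = complex_of_real (\<Sum>l<L. lamU l)"
    proof -
      have dr: "dim_row (mat_adjoint U * U) = L" using U by simp
      show ?thesis unfolding mtrace_def dr unfolding UU by (rule trU[OF S SS])
    qed
    have feas: "feasible \<sigma>2 \<gamma> n H M L U"
    proof -
      have "Re (\<Sum>l<L. complex_of_real \<sigma>2 * minv (gram H U) $$ (l, l)) = \<sigma>2 * (\<Sum>l<L. 1 / (lamU l * lamH l))"
        unfolding mi using Kdiag[OF S SS] by (simp add: sum_distrib_left[symmetric])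
      then show ?thesis unfolding feasible_def using U inv s2 by simp
    qed
    show "let U = V1 * mat_diag L (\<lambda>l. complex_of_real (sqrt (lamU l))) * mat_adjoint S in
          feasible \<sigma>2 \<gamma> n H M L U \<and>
          (\<forall>U'. feasible \<sigma>2 \<gamma> n H M L U' \<longrightarrow>
                 Re (mtrace (mat_adjoint U * U)) \<le> Re (mtrace (mat_adjoint U' * U'))) \<and>
          mtrace (mat_adjoint U * U) = complex_of_real (\<Sum>l<L. lamU l)"
      unfolding Let_def U_def[symmetric] using feas tr LB by simp
  next
    have L0: "L > 0" using L by simp
    define S where "S = dft L"
    have S: "S \<in> carrier_mat L L" and SS: "mat_adjoint S * S = 1\<^sub>m L"
      unfolding S_def using dft_unitary[OF L0] by auto
    define U where "U = V1 * mat_diag L (\<lambda>l. complex_of_real (sqrt (lamU l))) * mat_adjoint S"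
    from constr[OF S SS U_def] have mi: "minv (gram H U) = S * Dinv * mat_adjoint S" by auto
    have ent: "complex_of_real \<sigma>2 * minv (gram H U) $$ (l, l) = complex_of_real ((1 / real L) * (\<gamma> / real n))"
      if l: "l < L" for l
    proof -
      have "minv (gram H U) $$ (l,l) = (\<Sum>k<L. complex_of_real (1 / (lamU k * lamH k)) * complex_of_real ((cmod (S $$ (l,k)))\<^sup>2))"
        unfolding mi Dinv_def by (rule unit_conj_diag_entry[OF S l])
      also have "\<dots> = (\<Sum>k<L. complex_of_real (1 / (lamU k * lamH k) * (1 / real L)))"
        by (rule sum.cong[OF refl]) (simp add: S_def dft_abs l)
      also have "\<dots> = complex_of_real ((\<Sum>k<L. 1 / (lamU k * lamH k)) * (1 / real L))"
        by (simp only: sum_distrib_right of_real_sum)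
      finally have "complex_of_real \<sigma>2 * minv (gram H U) $$ (l, l) =
          complex_of_real (\<sigma>2 * (\<Sum>k<L. 1 / (lamU k * lamH k)) * (1 / real L))"
        by (simp add: mult.assoc)
      also have "\<dots> = complex_of_real ((1 / real L) * (\<gamma> / real n))" unfolding s2 by simp
      finally show ?thesis .
    qed
    show "\<exists>S. unitary_mat L S \<and>
        (let U = V1 * mat_diag L (\<lambda>l. complex_of_real (sqrt (lamU l))) * mat_adjoint S in
          \<forall>l<L. complex_of_real \<sigma>2 * minv (gram H U) $$ (l, l)
                 = complex_of_real ((1 / real L) * (\<gamma> / real n)))"
      by (rule exI[of _ S]) (use S SS ent in \<open>simp add: unitary_mat_def Let_def U_def\<close>)
  qed
qed

end
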